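(* The linear operator $$P(f):=\Big[\frac{\alpha_0q^0-1}{\kappa_0}\,n_h\sqrt{1+|\mathbf u_h|^2}+\frac{\Psi(\beta_0)-q^0}{\kappa_0}\,n_h\alpha_h+\beta_0\,n_h\mathbf u_h\cdot\mathbf q\Big]\sqrt{J^0},\qquad h=f\sqrt{J^0},$$ is the orthogonal projection from $L^2(\mathbb{R}^3)$ onto the five-dimensional space $N=\mathrm{span}\{\sqrt{J^0},\,q^\mu\sqrt{J^0}\ (\mu=0,1,2,3)\}$ with respect to the scalar product $\langle f,g\rangle_{q_0}=\int_{\mathbb{R}^3}\frac{f(\mathbf q)g(\mathbf q)}{q^0}\,d\mathbf q$. In particular, $P$ is self-adjoint with respect to that scalar product.
   Context: Dimensionless setting: $q^0=\sqrt{1+|\mathbf q|^2}$, $q^\mu=(q^0,\mathbf q)$, $K_j(\beta)=\int_0^\infty\cosh(jr)e^{-\beta\cosh r}dr$, $M(\beta)=\int_{\mathbb{R}^3}e^{-\beta\sqrt{1+|\mathbf p|^2}}d\mathbf p$, $\Psi(\beta)=\frac3\beta+\frac{K_1(\beta)}{K_2(\beta)}$. Fix $\beta_0>0$, $J^0(\mathbf q)=e^{-\beta_0q^0}/M(\beta_0)$, $\alpha_0=K_1(\beta_0)/K_2(\beta_0)$ and $\kappa_0=\frac{3\alpha_0}{\beta_0}+\alpha_0^2-1$. For $h=f\sqrt{J^0}$ the symbols are defined by $n_h\sqrt{1+|\mathbf u_h|^2}:=\int h\,d\mathbf q$, $n_h\alpha_h:=\int h\,\frac{d\mathbf q}{q^0}$,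 $n_h\mathbf u_h:=\int\mathbf q\,h\,\frac{d\mathbf q}{q^0}$ (linear in $f$). *)

theory Defs
  imports "HOL-Analysis.Analysis"
begin

type_synonym vec3 = "real ^ 3"

definition q0 :: "vec3 \<Rightarrow> real" where
  "q0 q = sqrt (1 + (norm q)^2)"

definition Kfun :: "real \<Rightarrow> real \<Rightarrow> real" where
  "Kfun j \<beta> = (LINT r:{0..}|lborel. cosh (j * r) * exp (- \<beta> * cosh r))"

definition Mfun :: "real \<Rightarrow> real" where
  "Mfun \<beta> = (\<integral>p. exp (- \<beta> * q0 p) \<partial>(lborel :: vec3 measure))"

definition Psi :: "real \<Rightarrow> real" where
  "Psi \<beta> = 3 / \<beta> + Kfun 1 \<beta> / Kfun 2 \<beta>"

definition J0 :: "real \<Rightarrow> vec3 \<Rightarrow> real" where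
  "J0 \<beta>0 q = exp (- \<beta>0 * q0 q) / Mfun \<beta>0"

definition sqrtJ0 :: "real \<Rightarrow> vec3 \<Rightarrow> real" where
  "sqrtJ0 \<beta>0 q = sqrt (J0 \<beta>0 q)"

definition alpha0 :: "real \<Rightarrow> real" where
  "alpha0 \<beta>0 = Kfun 1 \<beta>0 / Kfun 2 \<beta>0"

definition kappa0 :: "real \<Rightarrow> real" where
  "kappa0 \<beta>0 = 3 * alpha0 \<beta>0 / \<beta>0 + (alpha0 \<beta>0)^2 - 1"

text \<open>With h = f sqrt(J0): n_h sqrt(1+|u_h|^2) = \<integral> h dq\<close>
definition nh_energy :: "real \<Rightarrow> (vec3 \<Rightarrow> real) \<Rightarrow> real" where
  "nh_energy \<beta>0 f = (\<integral>q. f q * sqrtJ0 \<beta>0 q \<partial>lborel)"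

text \<open>n_h alpha_h = \<integral> h dq / q^0\<close>
definition nh_alpha :: "real \<Rightarrow> (vec3 \<Rightarrow> real) \<Rightarrow> real" where
  "nh_alpha \<beta>0 f = (\<integral>q. f q * sqrtJ0 \<beta>0 q / q0 q \<partial>lborel)"

text \<open>n_h u_h = \<integral> q h dq / q^0\<close>
definition nh_u :: "real \<Rightarrow> (vec3 \<Rightarrow> real) \<Rightarrow> vec3" where
  "nh_u \<beta>0 f = (\<integral>q. (f q * sqrtJ0 \<beta>0 q / q0 q) *\<^sub>R q \<partial>lborel)"

definition Pop :: "real \<Rightarrow> (vec3 \<Rightarrow> real) \<Rightarrow> vec3 \<Rightarrow> real" where
  "Pop \<beta>0 f q =
     ((alpha0 \<beta>0 * q0 q - 1) / kappa0 \<beta>0 * nh_energy \<beta>0 f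
      + (Psi \<beta>0 - q0 q) / kappa0 \<beta>0 * nh_alpha \<beta>0 f
      + \<beta>0 * (nh_u \<beta>0 f \<bullet> q)) * sqrtJ0 \<beta>0 q"

definition wip :: "(vec3 \<Rightarrow> real) \<Rightarrow> (vec3 \<Rightarrow> real) \<Rightarrow> real" where
  "wip f g = (\<integral>q. f q * g q / q0 q \<partial>lborel)"

definition L2 :: "(vec3 \<Rightarrow> real) \<Rightarrow> bool" where
  "L2 f \<longleftrightarrow> f \<in> borel_measurable lborel \<and> integrable lborel (\<lambda>q. (f q)^2)"

definition inN :: "real \<Rightarrow> (vec3 \<Rightarrow> real) \<Rightarrow> bool" where
  "inN \<beta>0 g \<longleftrightarrow> (\<exists>a b0 (b::vec3). \<forall>q. g q = (a + b0 * q0 q + b \<bullet> q) * sqrtJ0 \<beta>0 q)"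

end

theory Submission
  imports Defs "HOL-Real_Asymp.Real_Asymp"
begin


lemma pow_le_fact_exp: "0 \<le> (x::real) \<Longrightarrow> x ^ n \<le> fact n * exp x"
proof -
  assume x: "0 \<le> x"
  have "(\<Sum>i\<in>{n}. x ^ i /\<^sub>R fact i) \<le> (\<Sum>i. x ^ i /\<^sub>R fact i)"
    by (rule sum_le_suminf) (use x in \<open>auto intro: summable_exp\<close>)
  then have "x ^ n / fact n \<le> exp x" by (simp add: exp_def divide_inverse mult.commute)
  then show ?thesis by (simp add: divide_le_eq mult.commute)
qed

lemma cosh_ge_half: "(r::real) / 2 \<le> cosh r"
proof -
  have "r \<le> exp r" using exp_ge_add_one_self[of r] by linarith
  moreover have "0 < exp (-r)" by simp
  ultimately have "r / 2 \<le> (exp r + exp (-r)) / 2"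
    by (intro divide_right_mono add_increasing2) auto
  then show ?thesis by (simp add: cosh_field_def)
qed

lemma int_base:
  assumes g: "(g::real) > 0"
  shows "set_integrable lborel {0<..} (\<lambda>r. exp (- g * r))"
proof -
  have "set_integrable lborel (einterval 0 \<infinity>) (\<lambda>r. exp (- g * r))"
  proof (rule interval_integral_FTC_nonneg(1)[where F="\<lambda>r. - exp (- g * r) / g" and A="-1/g" and B=0])
    show "DERIV (\<lambda>r. - exp (- g * r) / g) x :> exp (- g * x)" for x
      using g by (auto intro!: derivative_eq_intros simp: field_simps)
    show "(((\<lambda>r. - exp (- g * r) / g) \<circ> real_of_ereal) \<longlongrightarrow> (-1/g)) (at_right 0)"
      unfolding zero_ereal_def ereal_tendsto_simps1
      using g by (rule_tac tendsto_within_subset[OF _ subset_UNIV]) (auto intro!: tendsto_eq_intros)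
    show "(((\<lambda>r. - exp (- g * r) / g) \<circ> real_of_ereal) \<longlongrightarrow> 0) (at_left \<infinity>)"
      unfolding ereal_tendsto_simps1 using g by real_asymp
  qed auto
  then show ?thesis by (simp add: einterval_def greaterThan_def)
qed

lemma cosh_pow_exp_le:
  assumes b: "(b::real) > 0" and r: "0 \<le> r"
  shows "cosh r ^ n * exp (- b * cosh r) \<le> fact n * (2/b)^n * exp (- (b/4) * r)"
proof -
  have c: "0 \<le> cosh r" by (simp add: order_trans[OF _ cosh_real_ge_1]) 
  have "cosh r ^ n = (2/b)^n * (b * cosh r / 2)^n" using b by (simp add: power_mult_distrib[symmetric])
  also have "(b * cosh r / 2)^n \<le> fact n * exp (b * cosh r / 2)"
    by (rule pow_le_fact_exp) (use b c in simp)
  finally have "cosh r ^ n \<le> (2/b)^n * (fact n * exp (b * cosh r / 2))"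
    using b by (simp add: mult_left_mono)
  then have "cosh r ^ n * exp (- b * cosh r) \<le> (2/b)^n * (fact n * exp (b * cosh r / 2)) * exp (- b * cosh r)"
    by (simp add: mult_right_mono)
  also have "\<dots> = fact n * (2/b)^n * (exp (b * cosh r / 2) * exp (- b * cosh r))"
    by (simp add: algebra_simps)
  also have "exp (b * cosh r / 2) * exp (- b * cosh r) = exp (- (b/2) * cosh r)"
    by (simp flip: exp_add)
  finally have *: "cosh r ^ n * exp (- b * cosh r) \<le> fact n * (2/b)^n * exp (- (b/2) * cosh r)" .
  also have "exp (- (b/2) * cosh r) \<le> exp (- (b/4) * r)"
    using cosh_ge_half[of r] b by simp
  hence "fact n * (2/b)^n * exp (- (b/2) * cosh r) \<le> fact n * (2/b)^n * exp (- (b/4) * r)"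
    using b by (intro mult_left_mono) auto
  with * show ?thesis by linarith
qed
lemma int_dom:
  assumes b: "(b::real) > 0" and gc: "continuous_on UNIV g"
    and bd: "\<And>r. 0 < r \<Longrightarrow> \<bar>g r\<bar> \<le> C * (cosh r ^ n * exp (- b * cosh r))"
  shows "set_integrable lborel {0<..} g"
proof (rule set_integrable_bound[where f="\<lambda>r. (\<bar>C\<bar> * fact n * (2/b)^n) * exp (- (b/4) * r)"])
  show "set_integrable lborel {0<..} (\<lambda>r. (\<bar>C\<bar> * fact n * (2/b)^n) * exp (- (b/4) * r))"
    using int_base[of "b/4"] b by (intro set_integrable_mult_right) auto
  show "set_borel_measurable lborel {0<..} g"
    unfolding set_borel_measurable_def using gc
    by (intro borel_measurable_scaleR borel_measurable_indicator) (auto simp: borel_measurable_continuous_onI)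
  show "AE x in lborel. x \<in> {0<..} \<longrightarrow> norm (g x) \<le> norm (\<bar>C\<bar> * fact n * (2 / b) ^ n * exp (- (b / 4) * x))"
  proof (intro AE_I2 impI)
    fix x :: real assume "x \<in> {0<..}"
    then have x: "0 < x" by simp
    have "\<bar>g x\<bar> \<le> C * (cosh x ^ n * exp (- b * cosh x))" by (rule bd[OF x])
    also have "\<dots> \<le> \<bar>C\<bar> * (cosh x ^ n * exp (- b * cosh x))"
      by (intro mult_right_mono) (auto simp: order_trans[OF _ cosh_real_ge_1])
    also have "\<dots> \<le> \<bar>C\<bar> * (fact n * (2/b)^n * exp (- (b/4) * x))"
      by (intro mult_left_mono cosh_pow_exp_le) (use b x in auto)
    finally show "norm (g x) \<le> norm (\<bar>C\<bar> * fact n * (2 / b) ^ n * exp (- (b / 4) * x))"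
      using b by (simp add: abs_mult mult.assoc)
  qed
qed


lemma abs_sinh_le_cosh: "\<bar>sinh (x::real)\<bar> \<le> cosh x"
  by (metis cosh_minus sinh_le_cosh_real sinh_minus abs_if neg_le_iff_le)

lemma cosh_double': "cosh (x * 2) = cosh (x::real) ^ 2 + sinh x ^ 2"
  using cosh_double[of x] by (simp add: mult.commute)

lemma FTC0:
  fixes F f :: "real \<Rightarrow> real"
  assumes F: "\<And>x. (F has_real_derivative f x) (at x)" and fc: "continuous_on UNIV f"
    and fi: "set_integrable lborel {0<..} f" and F0: "F 0 = 0" and Ftop: "(F \<longlongrightarrow> 0) at_top"
  shows "(LINT x:{0<..}|lborel. f x) = 0"
proof -
  have "(LBINT x=0..\<infinity>. f x) = 0 - 0"
  proof (rule interval_integral_FTC_integrable[where F=F])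
    show "(F has_vector_derivative f x) (at x)" for x
      using F by (simp add: has_real_derivative_iff_has_vector_derivative[symmetric])
    show "isCont f x" for x using fc by (simp add: continuous_on_eq_continuous_at)
    show "set_integrable lborel (einterval 0 \<infinity>) f" using fi by (simp add: einterval_def greaterThan_def)
    have "isCont F 0" using F by (rule DERIV_isCont)
    then have "(F \<longlongrightarrow> 0) (at 0)" using F0 by (simp add: isCont_def)
    then have "(F \<longlongrightarrow> 0) (at_right 0)" by (rule tendsto_within_subset) simp
    then show "((F \<circ> real_of_ereal) \<longlongrightarrow> 0) (at_right 0)"
      unfolding zero_ereal_def ereal_tendsto_simps1 .
    show "((F \<circ> real_of_ereal) \<longlongrightarrow> 0) (at_left \<infinity>)"
      unfolding ereal_tendsto_simps1 by (rule Ftop)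
  qed auto
  then show ?thesis by (simp add: zero_ereal_def interval_integral_to_infinity_eq)
qed

lemma cont_E [continuous_intros]:
  "continuous_on UNIV (\<lambda>r::real. sinh r ^ k * cosh r ^ m * exp (- b * cosh r))"
  by (intro continuous_intros)

lemma int_sc:
  assumes b: "(b::real) > 0"
  shows "set_integrable lborel {0<..} (\<lambda>r. sinh r ^ k * cosh r ^ m * exp (- b * cosh r))"
proof (rule int_dom[OF b, where C=1 and n="k+m"])
  show "continuous_on UNIV (\<lambda>r. sinh r ^ k * cosh r ^ m * exp (- b * cosh r))"
    by (intro continuous_intros)
  fix r :: real
  have "\<bar>sinh r ^ k * cosh r ^ m * exp (- b * cosh r)\<bar> = \<bar>sinh r\<bar> ^ k * cosh r ^ m * exp (- b * cosh r)"
    by (simp add: abs_mult power_abs)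
  also have "\<dots> \<le> cosh r ^ k * cosh r ^ m * exp (- b * cosh r)"
    by (intro mult_right_mono power_mono abs_sinh_le_cosh) auto
  finally show "\<bar>sinh r ^ k * cosh r ^ m * exp (- b * cosh r)\<bar> \<le> 1 * (cosh r ^ (k + m) * exp (- b * cosh r))"
    by (simp add: power_add)
qed

lemma int_cosh2:
  assumes b: "(b::real) > 0"
  shows "set_integrable lborel {0<..} (\<lambda>r. cosh (2 * r) * exp (- b * cosh r))"
proof -
  have "set_integrable lborel {0<..} (\<lambda>r. sinh r ^ 0 * cosh r ^ 2 * exp (- b * cosh r) + sinh r ^ 2 * cosh r ^ 0 * exp (- b * cosh r))"
    using int_sc[OF b] by (intro set_integral_add) 
  then show ?thesis by (simp add: cosh_double distrib_right)
qed

lemma Bessel1: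
  assumes b: "(b::real) > 0"
  shows "(LINT r:{0<..}|lborel. sinh r ^ 2 * exp (- b * cosh r)) = (LINT r:{0<..}|lborel. cosh r * exp (- b * cosh r)) / b"
proof -
  let ?f = "\<lambda>r. sinh r ^ 2 * cosh r ^ 0 * exp (- b * cosh r) - (1/b) * (sinh r ^ 0 * cosh r ^ 1 * exp (- b * cosh r))"
  have i1: "set_integrable lborel {0<..} (\<lambda>r. sinh r ^ 2 * cosh r ^ 0 * exp (- b * cosh r))" by (rule int_sc[OF b])
  have i2: "set_integrable lborel {0<..} (\<lambda>r. (1/b) * (sinh r ^ 0 * cosh r ^ 1 * exp (- b * cosh r)))"
    using int_sc[OF b] by (intro set_integrable_mult_right) 
  have "(LINT x:{0<..}|lborel. ?f x) = 0"
  proof (rule FTC0[where F="\<lambda>r. - sinh r * exp (- b * cosh r) / b"])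
    show "((\<lambda>r. - sinh r * exp (- b * cosh r) / b) has_real_derivative ?f x) (at x)" for x
      using b by (auto intro!: derivative_eq_intros simp: field_simps power2_eq_square)
    show "continuous_on UNIV ?f" by (intro continuous_intros)
    show "set_integrable lborel {0<..} ?f" using i1 i2 by (rule set_integral_diff)
    show "((\<lambda>r. - sinh r * exp (- b * cosh r) / b) \<longlongrightarrow> 0) at_top" using b by real_asymp
  qed simp
  then show ?thesis using set_integral_diff(2)[OF i1 i2] b by simp
qed

lemma Bessel2:
  assumes b: "(b::real) > 0"
  shows "(LINT r:{0<..}|lborel. sinh r ^ 2 * cosh r * exp (- b * cosh r)) = (LINT r:{0<..}|lborel. cosh (2*r) * exp (- b * cosh r)) / b"
proof -
  let ?f = "\<lambda>r. sinh r ^ 2 * cosh r ^ 1 * exp (- b * cosh r) - (1/b) * (cosh (2*r) * exp (- b * cosh r))"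
  have i1: "set_integrable lborel {0<..} (\<lambda>r. sinh r ^ 2 * cosh r ^ 1 * exp (- b * cosh r))" by (rule int_sc[OF b])
  have i2: "set_integrable lborel {0<..} (\<lambda>r. (1/b) * (cosh (2*r) * exp (- b * cosh r)))"
    using int_cosh2[OF b] by (intro set_integrable_mult_right) 
  have "(LINT x:{0<..}|lborel. ?f x) = 0"
  proof (rule FTC0[where F="\<lambda>r. - sinh r * cosh r * exp (- b * cosh r) / b"])
    show "((\<lambda>r. - sinh r * cosh r * exp (- b * cosh r) / b) has_real_derivative ?f x) (at x)" for x
      using b by (auto intro!: derivative_eq_intros simp: field_simps power2_eq_square cosh_double')
    show "continuous_on UNIV ?f" by (intro continuous_intros)
    show "set_integrable lborel {0<..} ?f" using i1 i2 by (rule set_integral_diff)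
    show "((\<lambda>r. - sinh r * cosh r * exp (- b * cosh r) / b) \<longlongrightarrow> 0) at_top" using b by real_asymp
  qed simp
  then show ?thesis using set_integral_diff(2)[OF i1 i2] b by simp
qed

lemma Bessel3:
  assumes b: "(b::real) > 0"
  shows "(LINT r:{0<..}|lborel. sinh r ^ 4 * exp (- b * cosh r)) = 3 * (LINT r:{0<..}|lborel. sinh r ^ 2 * cosh r * exp (- b * cosh r)) / b"
proof -
  let ?f = "\<lambda>r. sinh r ^ 4 * cosh r ^ 0 * exp (- b * cosh r) - (3/b) * (sinh r ^ 2 * cosh r ^ 1 * exp (- b * cosh r))"
  have i1: "set_integrable lborel {0<..} (\<lambda>r. sinh r ^ 4 * cosh r ^ 0 * exp (- b * cosh r))" by (rule int_sc[OF b])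
  have i2: "set_integrable lborel {0<..} (\<lambda>r. (3/b) * (sinh r ^ 2 * cosh r ^ 1 * exp (- b * cosh r)))"
    using int_sc[OF b] by (intro set_integrable_mult_right) 
  have "(LINT x:{0<..}|lborel. ?f x) = 0"
  proof (rule FTC0[where F="\<lambda>r. - (sinh r ^ 3) * exp (- b * cosh r) / b"])
    show "((\<lambda>r. - (sinh r ^ 3) * exp (- b * cosh r) / b) has_real_derivative ?f x) (at x)" for x
      using b by (auto intro!: derivative_eq_intros simp: field_simps power2_eq_square power3_eq_cube power4_eq_xxxx)
    show "continuous_on UNIV ?f" by (intro continuous_intros)
    show "set_integrable lborel {0<..} ?f" using i1 i2 by (rule set_integral_diff)
    show "((\<lambda>r. - (sinh r ^ 3) * exp (- b * cosh r) / b) \<longlongrightarrow> 0) at_top" using b by real_asymp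
  qed simp
  then show ?thesis using set_integral_diff(2)[OF i1 i2] b by simp
qed


definition phi :: "vec3 \<Rightarrow> real" where "phi q = arsinh (norm q)"

lemma cosh_phi: "cosh (phi q) = q0 q"
  by (simp add: phi_def q0_def cosh_arsinh_real add.commute)
lemma sinh_phi: "sinh (phi q) = norm q"
  by (simp add: phi_def)

lemma phi_meas[measurable]: "phi \<in> borel_measurable borel"
  unfolding phi_def
  by (intro borel_measurable_continuous_onI continuous_on_compose2[OF continuous_on_arsinh[of UNIV]]
      continuous_intros) auto

definition wrad :: "real \<Rightarrow> real" where
  "wrad r = indicator {0<..} r * (4 * pi * sinh r ^ 2 * cosh r)"

lemma sinh_meas[measurable]: "(sinh::real\<Rightarrow>real) \<in> borel_measurable borel"
  by (intro borel_measurable_continuous_onI continuous_on_sinh continuous_on_id)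
lemma cosh_meas[measurable]: "(cosh::real\<Rightarrow>real) \<in> borel_measurable borel"
  by (intro borel_measurable_continuous_onI continuous_on_cosh continuous_on_id)
lemma arsinh_le_iff: "arsinh y \<le> a \<longleftrightarrow> y \<le> sinh (a::real)"
  by (metis sinh_real_le_iff sinh_arsinh_real)

lemma wrad_meas[measurable]: "wrad \<in> borel_measurable borel"
  unfolding wrad_def by measurable

lemma wrad_nonneg: "0 \<le> wrad r"
  by (auto simp: wrad_def indicator_def)

lemma DIM_vec3: "DIM(vec3) = 3" by simp

lemma emeasure_phi_atMost:
  "emeasure (distr lborel borel phi) {..a} = ennreal (if a < 0 then 0 else 4 * pi / 3 * sinh a ^ 3)"
proof -
  have "phi -` {..a} \<inter> space lborel = cball (0::vec3) (sinh a)"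
    by (auto simp: phi_def cball_def arsinh_le_iff)
  then have "emeasure (distr lborel borel phi) {..a} = emeasure lborel (cball (0::vec3) (sinh a))"
    by (subst emeasure_distr) auto
  also have "\<dots> = ennreal (if a < 0 then 0 else 4 * pi / 3 * sinh a ^ 3)"
  proof (cases "a < 0")
    case True
    then have "cball (0::vec3) (sinh a) = {}" by auto
    then show ?thesis using True by simp
  next
    case False
    then have "sinh a \<ge> 0" by simp
    then show ?thesis using False by (simp add: emeasure_cball eval_unit_ball_vol)
  qed
  finally show ?thesis .
qed

lemma emeasure_wrad_atMost:
  "emeasure (density lborel (\<lambda>r. ennreal (wrad r))) {..a} = ennreal (if a < 0 then 0 else 4 * pi / 3 * sinh a ^ 3)"
proof -
  have "emeasure (density lborel (\<lambda>r. ennreal (wrad r))) {..a} = (\<integral>\<^sup>+ r. ennreal (wrad r) * indicator {..a} r \<partial>lborel)"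
    by (subst emeasure_density) auto
  also have "\<dots> = (\<integral>\<^sup>+ r. ennreal (indicator {0..a} r * (4 * pi * sinh r ^ 2 * cosh r)) \<partial>lborel)"
    by (intro nn_integral_cong) (auto simp: wrad_def indicator_def)
  also have "\<dots> = ennreal (if a < 0 then 0 else 4 * pi / 3 * sinh a ^ 3)"
  proof (cases "a < 0")
    case True
    then show ?thesis by simp
  next
    case False
    have int: "integrable lborel (\<lambda>r. indicator {0..a} r * (4 * pi * sinh r ^ 2 * cosh r))"
      using borel_integrable_atLeastAtMost'[of 0 a "\<lambda>r. 4 * pi * sinh r ^ 2 * cosh r"]
      by (simp add: set_integrable_def continuous_intros)
    have "(\<integral>\<^sup>+ r. ennreal (indicator {0..a} r * (4 * pi * sinh r ^ 2 * cosh r)) \<partial>lborel)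
        = ennreal (\<integral> r. indicator {0..a} r * (4 * pi * sinh r ^ 2 * cosh r) \<partial>lborel)"
      by (rule nn_integral_eq_integral[OF int]) (auto simp: indicator_def)
    also have "(\<integral> r. indicator {0..a} r * (4 * pi * sinh r ^ 2 * cosh r) \<partial>lborel)
        = (\<integral> r. indicator {0..a} r *\<^sub>R (4 * pi * sinh r ^ 2 * cosh r) \<partial>lborel)" by simp
    also have "\<dots> = 4 * pi / 3 * sinh a ^ 3 - 4 * pi / 3 * sinh 0 ^ 3"
    proof (rule integral_FTC_atLeastAtMost)
      show "0 \<le> a" using False by simp
      show "((\<lambda>r. 4 * pi / 3 * sinh r ^ 3) has_vector_derivative 4 * pi * sinh x ^ 2 * cosh x) (at x within {0..a})" for x
        unfolding has_real_derivative_iff_has_vector_derivative[symmetric]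
        by (auto intro!: derivative_eq_intros simp: power2_eq_square)
      show "continuous_on {0..a} (\<lambda>r. 4 * pi * sinh r ^ 2 * cosh r)" by (intro continuous_intros)
    qed
    finally show ?thesis using False by simp
  qed
  finally show ?thesis .
qed

lemma radial_measure: "distr lborel borel phi = density lborel (\<lambda>r. ennreal (wrad r))"
proof (rule measure_eqI_generator_eq[where E="range (\<lambda>a::real. {..a})" and \<Omega>=UNIV and A="\<lambda>i. {..real i}"])
  show "Int_stable (range (\<lambda>a::real. {..a}))"
    by (auto simp: Int_stable_def intro!: image_eqI[where x="min _ _"])
  show "sets (distr lborel borel phi) = sigma_sets UNIV (range atMost)"
    by (simp add: borel_eq_atMost sets_measure_of)
  show "sets (density lborel (\<lambda>r. ennreal (wrad r))) = sigma_sets UNIV (range atMost)"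
    by (simp add: borel_eq_atMost sets_measure_of)
  show "emeasure (distr lborel borel phi) X = emeasure (density lborel (\<lambda>r. ennreal (wrad r))) X"
    if "X \<in> range atMost" for X
    using that by (auto simp: emeasure_phi_atMost emeasure_wrad_atMost)
  show "emeasure (distr lborel borel phi) {..real i} \<noteq> \<infinity>" for i
    by (simp add: emeasure_phi_atMost)
  show "(\<Union>i. {..real i}) = UNIV"
    by (auto intro: real_arch_simple)
qed auto

lemma radial_integrable:
  fixes h :: "real \<Rightarrow> real"
  assumes [measurable]: "h \<in> borel_measurable borel"
  shows "integrable lborel (\<lambda>q. h (phi q)) \<longleftrightarrow> set_integrable lborel {0<..} (\<lambda>r. 4 * pi * sinh r ^ 2 * cosh r * h r)"
proof -
  have "integrable lborel (\<lambda>q. h (phi q)) \<longleftrightarrow> integrable (distr lborel borel phi) h"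
    by (subst integrable_distr_eq) auto
  also have "\<dots> \<longleftrightarrow> integrable lborel (\<lambda>r. wrad r *\<^sub>R h r)"
    unfolding radial_measure by (subst integrable_density) (auto simp: wrad_nonneg)
  also have "(\<lambda>r. wrad r *\<^sub>R h r) = (\<lambda>r. indicator {0<..} r *\<^sub>R (4 * pi * sinh r ^ 2 * cosh r * h r))"
    by (auto simp: wrad_def fun_eq_iff)
  finally show ?thesis by (simp add: set_integrable_def)
qed

lemma radial_integral:
  fixes h :: "real \<Rightarrow> real"
  assumes [measurable]: "h \<in> borel_measurable borel"
  shows "(\<integral>q. h (phi q) \<partial>lborel) = (LINT r:{0<..}|lborel. 4 * pi * sinh r ^ 2 * cosh r * h r)"
proof -
  have "(\<integral>q. h (phi q) \<partial>lborel) = integral\<^sup>L (distr lborel borel phi) h"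
    by (subst integral_distr) auto
  also have "\<dots> = (\<integral>r. wrad r *\<^sub>R h r \<partial>lborel)"
    unfolding radial_measure by (subst integral_density) (auto simp: wrad_nonneg)
  also have "(\<lambda>r. wrad r *\<^sub>R h r) = (\<lambda>r. indicator {0<..} r *\<^sub>R (4 * pi * sinh r ^ 2 * cosh r * h r))"
    by (auto simp: wrad_def fun_eq_iff)
  finally show ?thesis by (simp add: set_lebesgue_integral_def)
qed


lemma prod_Basis_vec: "(\<Prod>b\<in>(Basis::(real^'n) set). f b) = (\<Prod>i\<in>UNIV. f (axis i 1))"
proof -
  have B: "(Basis::(real^'n) set) = (\<lambda>i. axis i 1) ` UNIV"
    by (auto simp: Basis_vec_def)
  have "inj (\<lambda>i::'n. axis i (1::real))"
    by (auto simp: inj_def axis_eq_axis)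
  then show ?thesis unfolding B by (simp add: prod.reindex)
qed

lemma lborel_perm_sign:
  fixes \<sigma> :: "'n::finite \<Rightarrow> 'n" and \<epsilon> :: "'n \<Rightarrow> real"
  assumes bij: "bij \<sigma>" and eps: "\<And>k. \<epsilon> k = 1 \<or> \<epsilon> k = -1"
  shows "distr lborel borel (\<lambda>q::real^'n. \<chi> k. \<epsilon> k * q $ \<sigma> k) = lborel"
proof (rule lborel_eqI[symmetric])
  define \<tau> where "\<tau> = inv \<sigma>"
  have st: "\<sigma> (\<tau> j) = j" for j unfolding \<tau>_def using bij by (simp add: bij_is_surj surj_f_inv_f)
  have ts: "\<tau> (\<sigma> j) = j" for j unfolding \<tau>_def using bij by (simp add: bij_is_inj inv_f_f)
  let ?T = "\<lambda>q::real^'n. \<chi> k. \<epsilon> k * q $ \<sigma> k"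
  have Tm[measurable]: "?T \<in> borel_measurable borel"
    by (intro borel_measurable_continuous_onI linear_continuous_on bounded_linearI')
       (auto simp: vec_eq_iff algebra_simps)
  fix l u :: "real^'n"
  assume le: "\<And>b. b \<in> Basis \<Longrightarrow> l \<bullet> b \<le> u \<bullet> b"
  have le': "l $ i \<le> u $ i" for i using le[of "axis i 1"] by (auto simp: Basis_vec_def inner_axis)
  define l' :: "real^'n" where "l' = (\<chi> j. if \<epsilon> (\<tau> j) = 1 then l $ \<tau> j else - u $ \<tau> j)"
  define u' :: "real^'n" where "u' = (\<chi> j. if \<epsilon> (\<tau> j) = 1 then u $ \<tau> j else - l $ \<tau> j)"
  have pre: "?T -` box l u = box l' u'"
  proof -
    have "q \<in> ?T -` box l u \<longleftrightarrow> (\<forall>k. l $ k < \<epsilon> k * q $ \<sigma> k \<and> \<epsilon> k * q $ \<sigma> k < u $ k)" for q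
      by (simp add: mem_box_cart)
    also have "\<dots> q \<longleftrightarrow> (\<forall>j. l $ \<tau> j < \<epsilon> (\<tau> j) * q $ j \<and> \<epsilon> (\<tau> j) * q $ j < u $ \<tau> j)" for q
      by (metis st ts)
    also have "\<dots> q \<longleftrightarrow> q \<in> box l' u'" for q
      unfolding mem_box_cart l'_def u'_def using eps by (auto; metis add.inverse_inverse minus_less_iff mult_minus_left mult_1 eps)
    finally show ?thesis by auto
  qed
  have le2: "l' \<bullet> b \<le> u' \<bullet> b" if "b \<in> Basis" for b
    using that le' by (auto simp: Basis_vec_def inner_axis l'_def u'_def)
  have "emeasure (distr lborel borel ?T) (box l u) = emeasure lborel (box l' u')"
    by (subst emeasure_distr) (auto simp: pre)
  also have "\<dots> = (\<Prod>b\<in>Basis. (u' - l') \<bullet> b)" using le2 by simp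
  also have "\<dots> = (\<Prod>j\<in>UNIV. (u - l) $ \<tau> j)"
    apply (simp add: prod_Basis_vec inner_axis l'_def u'_def)
    by (rule arg_cong[where f=ennreal], rule prod.cong) auto
  also have "\<dots> = (\<Prod>j\<in>UNIV. (u - l) $ j)"
  proof -
    have "bij \<tau>" unfolding \<tau>_def using bij by (simp add: bij_imp_bij_inv)
    from prod.reindex_bij_betw[OF this, of "\<lambda>j. (u - l) $ j"] show ?thesis by simp
  qed
  also have "\<dots> = (\<Prod>b\<in>Basis. (u - l) \<bullet> b)"
    by (simp add: prod_Basis_vec inner_axis)
  finally show "emeasure (distr lborel borel ?T) (box l u) = (\<Prod>b\<in>Basis. (u - l) \<bullet> b)" .
qed simp

lemma integral_perm_sign:
  fixes \<sigma> :: "'n::finite \<Rightarrow> 'n" and \<epsilon> :: "'n \<Rightarrow> real" and f :: "real^'n \<Rightarrow> 'b::{banach, second_countable_topology}"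
  assumes bij: "bij \<sigma>" and eps: "\<And>k. \<epsilon> k = 1 \<or> \<epsilon> k = -1" and f[measurable]: "f \<in> borel_measurable borel"
  shows "(\<integral>q. f (\<chi> k. \<epsilon> k * q $ \<sigma> k) \<partial>lborel) = (\<integral>q. f q \<partial>lborel)"
    and "integrable lborel (\<lambda>q. f (\<chi> k. \<epsilon> k * q $ \<sigma> k)) \<longleftrightarrow> integrable lborel f"
proof -
  let ?T = "\<lambda>q::real^'n. \<chi> k. \<epsilon> k * q $ \<sigma> k"
  have Tm[measurable]: "?T \<in> borel_measurable borel"
    by (intro borel_measurable_continuous_onI linear_continuous_on bounded_linearI')
       (auto simp: vec_eq_iff algebra_simps)
  have "(\<integral>q. f (?T q) \<partial>lborel) = integral\<^sup>L (distr lborel borel ?T) f"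
    by (subst integral_distr) auto
  then show "(\<integral>q. f (?T q) \<partial>lborel) = (\<integral>q. f q \<partial>lborel)"
    using lborel_perm_sign[OF bij eps] by simp
  have "integrable lborel (\<lambda>q. f (?T q)) \<longleftrightarrow> integrable (distr lborel borel ?T) f"
    by (subst integrable_distr_eq) auto
  then show "integrable lborel (\<lambda>q. f (?T q)) \<longleftrightarrow> integrable lborel f"
    using lborel_perm_sign[OF bij eps] by simp
qed


lemma q0_ge1: "1 \<le> q0 q" by (simp add: q0_def)
lemma q0_pos: "0 < q0 q" using q0_ge1[of q] by linarith
lemma norm_le_q0: "norm q \<le> q0 q" by (simp add: q0_def real_le_rsqrt)
lemma q0_cont: "continuous_on UNIV q0"
  unfolding q0_def[abs_def] by (intro continuous_intros)
lemma q0_meas[measurable]: "q0 \<in> borel_measurable borel"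
  by (rule borel_measurable_continuous_onI[OF q0_cont])

lemma pw1: "4 * pi * sinh r^2*cosh r*(exp(-b*cosh r)*cosh r) = 4 * pi * (sinh r^2*cosh r^0*exp(-b*cosh r) + sinh r^4*cosh r^0*exp(-b*cosh (r::real)))"
proof -
  have cc: "cosh r * cosh r = sinh r * sinh r + 1" using cosh_square_eq[of r] by (simp add: power2_eq_square)
  have "4 * pi * sinh r^2*cosh r*(exp(-b*cosh r)*cosh r) = 4 * pi * sinh r^2*exp(-b*cosh r)*(cosh r*cosh r)"
    by (simp add: mult_ac)
  also have "\<dots> = 4 * pi * sinh r^2*exp(-b*cosh r)*(sinh r * sinh r + 1)" by (simp only: cc)
  finally show ?thesis by (simp add: algebra_simps power2_eq_square power4_eq_xxxx)
qed
lemma pw2: "4 * pi * (sinh r)\<^sup>2 * cosh r * (exp (- b * cosh r) * ((cosh r)\<^sup>2 - 1) / cosh r) = 4 * pi * (sinh r ^ 4 * exp (- b * cosh (r::real)))"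
proof -
  have c: "cosh r ^ 2 - 1 = sinh r ^ 2" using cosh_square_eq[of r] by simp
  have "4 * pi * (sinh r)\<^sup>2 * cosh r * (exp (- b * cosh r) * ((cosh r)\<^sup>2 - 1) / cosh r) = 4 * pi * (sinh r)\<^sup>2 * (exp (- b * cosh r) * ((cosh r)\<^sup>2 - 1))"
    by simp
  also have "\<dots> = 4 * pi * (sinh r ^ 4 * exp (- b * cosh (r::real)))" 
    by (simp only: c) (simp add: power4_eq_xxxx power2_eq_square)
  finally show ?thesis .
qed

lemma radial_q0:
  fixes H :: "real \<Rightarrow> real"
  assumes [measurable]: "H \<in> borel_measurable borel"
  shows "(\<integral>q. H (q0 q) \<partial>lborel) = (LINT r:{0<..}|lborel. 4 * pi * sinh r ^ 2 * cosh r * H (cosh r))"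
    and "integrable lborel (\<lambda>q. H (q0 q)) \<longleftrightarrow> set_integrable lborel {0<..} (\<lambda>r. 4 * pi * sinh r ^ 2 * cosh r * H (cosh r))"
  using radial_integral[of "\<lambda>r. H (cosh r)"] radial_integrable[of "\<lambda>r. H (cosh r)"]
  by (simp_all add: cosh_phi)

definition A0 :: "real \<Rightarrow> real" where "A0 b = (LINT r:{0<..}|lborel. sinh r ^ 2 * cosh r * exp (- b * cosh r))"
definition A1 :: "real \<Rightarrow> real" where "A1 b = (LINT r:{0<..}|lborel. sinh r ^ 2 * exp (- b * cosh r))"
definition A3 :: "real \<Rightarrow> real" where "A3 b = (LINT r:{0<..}|lborel. sinh r ^ 4 * exp (- b * cosh r))"

lemma int_q0pow:
  assumes b: "(b::real) > 0"
  shows "integrable lborel (\<lambda>q::vec3. q0 q ^ k * exp (- b * q0 q))"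
proof -
  have "set_integrable lborel {0<..} (\<lambda>r. 4 * pi * (sinh r ^ 2 * cosh r ^ (k+1) * exp (- b * cosh r)))"
    using int_sc[OF b] by (intro set_integrable_mult_right) 
  then have "set_integrable lborel {0<..} (\<lambda>r. 4 * pi * sinh r ^ 2 * cosh r * (cosh r ^ k * exp (- b * cosh r)))"
    by (rule set_integrable_cong[THEN iffD1, rotated 3]) (auto simp: algebra_simps)
  then show ?thesis using radial_q0(2)[of "\<lambda>c. c ^ k * exp (- b * c)"] by simp
qed

lemma Mfun_eq: "Mfun b = 4 * pi * A0 b"
proof -
  have "Mfun b = (LINT r:{0<..}|lborel. 4 * pi * sinh r ^ 2 * cosh r * exp (- b * cosh r))"
    unfolding Mfun_def using radial_q0(1)[of "\<lambda>c. exp (- b * c)"] by simp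
  also have "\<dots> = (LINT r:{0<..}|lborel. 4 * pi * (sinh r ^ 2 * cosh r * exp (- b * cosh r)))"
    by (simp add: mult.assoc)
  finally show ?thesis by (simp add: A0_def)
qed

lemma int_over_q0:
  assumes b: "(b::real) > 0"
  shows "(\<integral>q. exp (- b * q0 q) / q0 q \<partial>lborel) = 4 * pi * A1 b"
proof -
  have "(\<integral>q. exp (- b * q0 q) / q0 q \<partial>lborel) = (LINT r:{0<..}|lborel. 4 * pi * sinh r ^ 2 * cosh r * (exp (- b * cosh r) / cosh r))"
    using radial_q0(1)[of "\<lambda>c. exp (- b * c) / c"] by simp
  also have "\<dots> = (LINT r:{0<..}|lborel. 4 * pi * (sinh r ^ 2 * exp (- b * cosh r)))"
    by (rule set_lebesgue_integral_cong) auto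
  finally show ?thesis by (simp add: A1_def)
qed

lemma int_times_q0:
  assumes b: "(b::real) > 0"
  shows "(\<integral>q. exp (- b * q0 q) * q0 q \<partial>lborel) = 4 * pi * (A1 b + A3 b)"
proof -
  have i1: "set_integrable lborel {0<..} (\<lambda>r. sinh r ^ 2 * cosh r ^ 0 * exp (- b * cosh r))" by (rule int_sc[OF b])
  have i2: "set_integrable lborel {0<..} (\<lambda>r. sinh r ^ 4 * cosh r ^ 0 * exp (- b * cosh r))" by (rule int_sc[OF b])
  have "(\<integral>q. exp (- b * q0 q) * q0 q \<partial>lborel) = (LINT r:{0<..}|lborel. 4 * pi * sinh r ^ 2 * cosh r * (exp (- b * cosh r) * cosh r))"
    using radial_q0(1)[of "\<lambda>c. exp (- b * c) * c"] by simp
  also have "\<dots> = (LINT r:{0<..}|lborel. 4 * pi * (sinh r ^ 2 * cosh r ^ 0 * exp (- b * cosh r) + sinh r ^ 4 * cosh r ^ 0 * exp (- b * cosh r)))"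
    by (rule set_lebesgue_integral_cong) (simp, intro allI impI, rule pw1)
  also have "\<dots> = 4 * pi * (A1 b + A3 b)"
    using set_integral_add(2)[OF i1 i2] by (simp add: A1_def A3_def)
  finally show ?thesis .
qed

lemma int_normsq_over_q0:
  assumes b: "(b::real) > 0"
  shows "(\<integral>q. exp (- b * q0 q) * norm q ^ 2 / q0 q \<partial>lborel) = 4 * pi * A3 b"
proof -
  have nq: "norm q ^ 2 = q0 q ^ 2 - 1" for q :: vec3 by (simp add: q0_def)
  have "(\<integral>q. exp (- b * q0 q) * norm q ^ 2 / q0 q \<partial>lborel) = (\<integral>q. exp (- b * q0 q) * (q0 q ^ 2 - 1) / q0 q \<partial>lborel)"
    by (simp add: nq)
  also have "\<dots> = (LINT r:{0<..}|lborel. 4 * pi * sinh r ^ 2 * cosh r * (exp (- b * cosh r) * (cosh r ^ 2 - 1) / cosh r))"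
    using radial_q0(1)[of "\<lambda>c. exp (- b * c) * (c ^ 2 - 1) / c"] by simp
  also have "\<dots> = (LINT r:{0<..}|lborel. 4 * pi * (sinh r ^ 4 * exp (- b * cosh r)))"
    by (rule set_lebesgue_integral_cong) (simp, intro allI impI, rule pw2)
  finally show ?thesis by (simp add: A3_def)
qed

lemma set_integral_pos:
  fixes g :: "real \<Rightarrow> real"
  assumes gc: "continuous_on UNIV g" and gi: "set_integrable lborel {0<..} g"
    and nn: "\<And>x. 0 < x \<Longrightarrow> 0 \<le> g x" and z: "0 < z" "0 < g z"
  shows "0 < (LINT x:{0<..}|lborel. g x)"
proof -
  have int: "integrable lborel (\<lambda>x. indicator {0<..} x *\<^sub>R g x)" using gi by (simp add: set_integrable_def)
  have nn': "AE x in lborel. 0 \<le> indicator {0<..} x *\<^sub>R g x" by (auto simp: indicator_def nn)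
  have ge: "0 \<le> (LINT x:{0<..}|lborel. g x)"
    unfolding set_lebesgue_integral_def by (rule integral_nonneg_AE[OF nn'])
  have "isCont g z" using gc by (simp add: continuous_on_eq_continuous_at)
  then obtain d where d: "d > 0" "\<And>y. \<bar>y - z\<bar> < d \<Longrightarrow> \<bar>g y - g z\<bar> < g z"
    using z(2) unfolding continuous_at_eps_delta by (metis dist_real_def)
  define e where "e = min d z"
  have e: "e > 0" "e \<le> d" "e \<le> z" using d z by (auto simp: e_def)
  let ?S = "{z - e <..< z + e}"
  have pos: "0 < indicator {0<..} y *\<^sub>R g y" if "y \<in> ?S" for y
  proof -
    have "\<bar>y - z\<bar> < d" using that e by auto
    then have "0 < g y" using d(2)[of y] by linarith
    moreover have "0 < y" using that e by auto
    ultimately show ?thesis by simp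
  qed
  show ?thesis
  proof (rule ccontr)
    assume "\<not> ?thesis"
    then have "(LINT x:{0<..}|lborel. g x) = 0" using ge by linarith
    then have "AE x in lborel. indicator {0<..} x *\<^sub>R g x = 0"
      using integral_nonneg_eq_0_iff_AE[OF int nn'] unfolding set_lebesgue_integral_def by simp
    then have "AE x in lborel. x \<notin> ?S" by eventually_elim (use pos in force)
    then have "?S \<in> null_sets lborel" by (subst AE_iff_null_sets) auto
    then have "emeasure lborel ?S = 0" by auto
    then show False using e by simp
  qed
qed

lemma A0_pos: "(b::real) > 0 \<Longrightarrow> 0 < A0 b"
  unfolding A0_def
  by (rule set_integral_pos[where z=1])
     (auto intro!: continuous_intros simp: int_sc[where k=2 and m=1, simplified])
lemma A1_pos: "(b::real) > 0 \<Longrightarrow> 0 < A1 b"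
  unfolding A1_def
  by (rule set_integral_pos[where z=1])
     (auto intro!: continuous_intros simp: int_sc[where k=2 and m=0, simplified])


lemma set_int_Ici_Ioi:
  fixes f :: "real \<Rightarrow> real"
  assumes [measurable]: "f \<in> borel_measurable borel"
  shows "(LINT x:{0..}|lborel. f x) = (LINT x:{0<..}|lborel. f x)"
  unfolding set_lebesgue_integral_def
proof (rule integral_cong_AE)
  show "AE x in lborel. indicator {0..} x *\<^sub>R f x = indicator {0<..} x *\<^sub>R f x"
    using AE_lborel_singleton[of 0] by eventually_elim (auto simp: indicator_def)
qed auto

lemma Kfun1: "(b::real) > 0 \<Longrightarrow> Kfun 1 b = b * A1 b"
  unfolding Kfun_def A1_def
  by (subst set_int_Ici_Ioi) (use Bessel1[of b] in \<open>auto simp: field_simps\<close>)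

lemma Kfun2: "(b::real) > 0 \<Longrightarrow> Kfun 2 b = b * A0 b"
  unfolding Kfun_def A0_def
  by (subst set_int_Ici_Ioi) (use Bessel2[of b] in \<open>auto simp: field_simps\<close>)

lemma A3_eq: "(b::real) > 0 \<Longrightarrow> A3 b = 3 * A0 b / b"
  unfolding A3_def A0_def by (rule Bessel3)

lemma alpha0_eq: "(b::real) > 0 \<Longrightarrow> alpha0 b = A1 b / A0 b"
  unfolding alpha0_def using A0_pos[of b] by (simp add: Kfun1 Kfun2)

lemma Psi_eq: "(b::real) > 0 \<Longrightarrow> Psi b = 3 / b + A1 b / A0 b"
  unfolding Psi_def using A0_pos[of b] by (simp add: Kfun1 Kfun2)

lemma pw3: "sinh r ^ 2 * cosh r ^ 2 * exp (- b * cosh r) = sinh r ^ 2 * cosh r ^ 0 * exp (- b * cosh r) + sinh r ^ 4 * cosh r ^ 0 * exp (- b * cosh (r::real))"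
proof -
  have cc: "cosh r ^ 2 = sinh r ^ 2 + 1" by (rule cosh_square_eq)
  show ?thesis by (simp only: cc) (simp add: algebra_simps power2_eq_square power4_eq_xxxx)
qed

lemma A2_eq:
  assumes b: "(b::real) > 0"
  shows "(LINT r:{0<..}|lborel. sinh r ^ 2 * cosh r ^ 2 * exp (- b * cosh r)) = A1 b + A3 b"
proof -
  have i1: "set_integrable lborel {0<..} (\<lambda>r. sinh r ^ 2 * cosh r ^ 0 * exp (- b * cosh r))" by (rule int_sc[OF b])
  have i2: "set_integrable lborel {0<..} (\<lambda>r. sinh r ^ 4 * cosh r ^ 0 * exp (- b * cosh r))" by (rule int_sc[OF b])
  have "(LINT r:{0<..}|lborel. sinh r ^ 2 * cosh r ^ 2 * exp (- b * cosh r))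
      = (LINT r:{0<..}|lborel. sinh r ^ 2 * cosh r ^ 0 * exp (- b * cosh r) + sinh r ^ 4 * cosh r ^ 0 * exp (- b * cosh r))"
    by (rule set_lebesgue_integral_cong) (simp, intro allI impI, rule pw3)
  also have "\<dots> = A1 b + A3 b" using set_integral_add(2)[OF i1 i2] by (simp add: A1_def A3_def)
  finally show ?thesis .
qed

lemma CS_strict:
  assumes b: "(b::real) > 0"
  shows "A0 b ^ 2 < A1 b * (A1 b + A3 b)"
proof -
  define t where "t = A0 b / A1 b"
  have A1p: "A1 b > 0" by (rule A1_pos[OF b])
  let ?g = "\<lambda>r. sinh r ^ 2 * exp (- b * cosh r) * (cosh r - t) ^ 2"
  have i0: "set_integrable lborel {0<..} (\<lambda>r. sinh r ^ 2 * cosh r ^ 2 * exp (- b * cosh r))" by (rule int_sc[OF b])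
  have i1: "set_integrable lborel {0<..} (\<lambda>r. (2 * t) * (sinh r ^ 2 * cosh r ^ 1 * exp (- b * cosh r)))"
    using int_sc[OF b] by (intro set_integrable_mult_right)
  have i2: "set_integrable lborel {0<..} (\<lambda>r. t^2 * (sinh r ^ 2 * cosh r ^ 0 * exp (- b * cosh r)))"
    using int_sc[OF b] by (intro set_integrable_mult_right)
  have i01: "set_integrable lborel {0<..} (\<lambda>r. sinh r ^ 2 * cosh r ^ 2 * exp (- b * cosh r) - (2 * t) * (sinh r ^ 2 * cosh r ^ 1 * exp (- b * cosh r)))"
    using i0 i1 by (rule set_integral_diff)
  have eqg: "?g r = (sinh r ^ 2 * cosh r ^ 2 * exp (- b * cosh r) - (2 * t) * (sinh r ^ 2 * cosh r ^ 1 * exp (- b * cosh r))) + t^2 * (sinh r ^ 2 * cosh r ^ 0 * exp (- b * cosh r))" for r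
    by (simp add: power2_eq_square algebra_simps)
  have gi: "set_integrable lborel {0<..} ?g"
    unfolding eqg using i01 i2 by (rule set_integral_add)
  have "(LINT r:{0<..}|lborel. ?g r) = (A1 b + A3 b) - 2 * t * A0 b + t^2 * A1 b"
    unfolding eqg using set_integral_add(2)[OF i01 i2] set_integral_diff(2)[OF i0 i1] A2_eq[OF b]
    by (simp add: A0_def A1_def)
  also have "\<dots> = (A1 b + A3 b) - A0 b ^ 2 / A1 b"
    using A1p by (simp add: t_def field_simps power2_eq_square)
  finally have eq: "(LINT r:{0<..}|lborel. ?g r) = (A1 b + A3 b) - A0 b ^ 2 / A1 b" .
  define z where "z = (if cosh 1 = t then 2 else (1::real))"
  have z: "z > 0" "cosh z \<noteq> t" by (auto simp: z_def)
  have "0 < (LINT r:{0<..}|lborel. ?g r)"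
  proof (rule set_integral_pos[OF _ gi _ z(1)])
    show "continuous_on UNIV ?g" by (intro continuous_intros)
    show "0 \<le> ?g x" for x by simp
    show "0 < ?g z" using z by simp
  qed
  then have "A0 b ^ 2 / A1 b < A1 b + A3 b" using eq by simp
  then show ?thesis using A1p by (simp add: divide_less_eq mult.commute)
qed

lemma kappa0_pos:
  assumes b: "(b::real) > 0"
  shows "kappa0 b > 0"
proof -
  have A0p: "A0 b > 0" by (rule A0_pos[OF b])
  have "kappa0 b = (A1 b * (A1 b + A3 b) - A0 b ^ 2) / A0 b ^ 2"
    unfolding kappa0_def alpha0_eq[OF b] A3_eq[OF b] using A0p b
    by (simp add: field_simps power2_eq_square)
  then show ?thesis using CS_strict[OF b] A0p by simp
qed

lemma kappa0_alt: "(b::real) > 0 \<Longrightarrow> kappa0 b = alpha0 b * Psi b - 1"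
  unfolding kappa0_def Psi_def alpha0_def by (simp add: algebra_simps power2_eq_square)


lemma inner_perm_sign:
  fixes \<sigma> :: "'n::finite \<Rightarrow> 'n" and \<epsilon> :: "'n \<Rightarrow> real"
  assumes bij: "bij \<sigma>" and eps: "\<And>k. \<epsilon> k = 1 \<or> \<epsilon> k = -1"
  shows "(\<chi> k. \<epsilon> k * q $ \<sigma> k) \<bullet> (\<chi> k. \<epsilon> k * q $ \<sigma> k) = q \<bullet> (q::real^'n)"
proof -
  have e2: "\<epsilon> k * \<epsilon> k = 1" for k using eps[of k] by auto
  have "(\<chi> k. \<epsilon> k * q $ \<sigma> k) \<bullet> (\<chi> k. \<epsilon> k * q $ \<sigma> k) = (\<Sum>k\<in>UNIV. (\<epsilon> k * \<epsilon> k) * (q $ \<sigma> k * q $ \<sigma> k))"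
    by (simp add: inner_vec_def algebra_simps)
  also have "\<dots> = (\<Sum>k\<in>UNIV. q $ \<sigma> k * q $ \<sigma> k)" by (simp add: e2)
  also have "\<dots> = (\<Sum>k\<in>UNIV. q $ k * q $ k)"
    using sum.reindex_bij_betw[OF bij, of "\<lambda>k. q $ k * q $ k"] by simp
  also have "\<dots> = q \<bullet> q" by (simp add: inner_vec_def)
  finally show ?thesis .
qed

lemma norm_perm_sign:
  fixes \<sigma> :: "'n::finite \<Rightarrow> 'n" and \<epsilon> :: "'n \<Rightarrow> real"
  assumes bij: "bij \<sigma>" and eps: "\<And>k. \<epsilon> k = 1 \<or> \<epsilon> k = -1"
  shows "norm (\<chi> k. \<epsilon> k * q $ \<sigma> k) = norm (q::real^'n)"
  using inner_perm_sign[OF assms, where q=q] by (simp add: norm_eq_sqrt_inner)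

lemma q0_perm_sign:
  fixes \<sigma> :: "3 \<Rightarrow> 3" and \<epsilon> :: "3 \<Rightarrow> real"
  assumes bij: "bij \<sigma>" and eps: "\<And>k. \<epsilon> k = 1 \<or> \<epsilon> k = -1"
  shows "q0 (\<chi> k. \<epsilon> k * q $ \<sigma> k) = q0 q"
  unfolding q0_def using norm_perm_sign[OF assms] by simp

lemma neg_self_zero: "- (x::'a::real_vector) = x \<Longrightarrow> x = 0"
proof -
  assume h: "- x = x"
  have "x + x = 0" by (subst (1) h[symmetric]) simp
  then have "(2::real) *\<^sub>R x = 0" by (simp add: scaleR_2)
  then show ?thesis by simp
qed

lemma odd_moment:
  fixes H :: "real \<Rightarrow> real"
  assumes [measurable]: "H \<in> borel_measurable borel"
  shows "(\<integral>q. H (q0 q) *\<^sub>R q \<partial>lborel) = (0::vec3)"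
proof -
  let ?f = "\<lambda>q::vec3. H (q0 q) *\<^sub>R q"
  have eps: "\<And>k::3. (\<lambda>_. -1::real) k = 1 \<or> (\<lambda>_. -1::real) k = -1" by simp
  have T: "(\<chi> k. - q $ k) = - q" for q :: vec3 by (simp add: vec_eq_iff)
  have "(\<integral>q. ?f (\<chi> k. (\<lambda>_. -1::real) k * q $ id k) \<partial>lborel) = (\<integral>q. ?f q \<partial>lborel)"
    by (rule integral_perm_sign(1)[OF bij_id eps]) measurable
  moreover have "(\<lambda>q. ?f (\<chi> k. (\<lambda>_. -1::real) k * q $ id k)) = (\<lambda>q. - ?f q)"
    using q0_perm_sign[OF bij_id eps] by (auto simp: T fun_eq_iff)
  ultimately have h: "- (\<integral>q. ?f q \<partial>lborel) = (\<integral>q. ?f q \<partial>lborel)" by simp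
  then show ?thesis by (rule neg_self_zero)
qed

lemma offdiag_moment:
  fixes H :: "real \<Rightarrow> real" and i j :: 3
  assumes [measurable]: "H \<in> borel_measurable borel" and ij: "i \<noteq> j"
  shows "(\<integral>q. H (q0 q) * (q $ i * q $ j) \<partial>lborel) = 0"
proof -
  let ?f = "\<lambda>q::vec3. H (q0 q) * (q $ i * q $ j)"
  define e where "e = (\<lambda>k::3. if k = i then -1 else (1::real))"
  have eps: "\<And>k. e k = 1 \<or> e k = -1" by (simp add: e_def)
  have "(\<integral>q. ?f (\<chi> k. e k * q $ id k) \<partial>lborel) = (\<integral>q. ?f q \<partial>lborel)"
    by (rule integral_perm_sign(1)[OF bij_id eps]) measurable
  moreover have "(\<lambda>q. ?f (\<chi> k. e k * q $ id k)) = (\<lambda>q. - ?f q)"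
    using q0_perm_sign[OF bij_id eps] ij by (auto simp: fun_eq_iff e_def)
  ultimately have "- (\<integral>q. ?f q \<partial>lborel) = (\<integral>q. ?f q \<partial>lborel)" by simp
  then show ?thesis by linarith
qed

lemma diag_swap:
  fixes H :: "real \<Rightarrow> real" and i j :: 3
  assumes [measurable]: "H \<in> borel_measurable borel"
  shows "(\<integral>q. H (q0 q) * (q $ i)^2 \<partial>lborel) = (\<integral>q. H (q0 q) * (q $ j)^2 \<partial>lborel)"
proof -
  let ?f = "\<lambda>q::vec3. H (q0 q) * (q $ i)^2"
  define s where "s = (\<lambda>k::3. if k = i then j else if k = j then i else k)"
  have ss: "s (s k) = k" for k by (auto simp: s_def)
  have bs: "bij s" by (metis bij_betw_byWitness[of UNIV s s UNIV] ss subset_UNIV image_subset_iff iso_tuple_UNIV_I)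
  have eps: "\<And>k. (\<lambda>_. 1::real) k = 1 \<or> (\<lambda>_. 1::real) k = -1" by simp
  have "(\<integral>q. ?f (\<chi> k. (\<lambda>_. 1::real) k * q $ s k) \<partial>lborel) = (\<integral>q. ?f q \<partial>lborel)"
    by (rule integral_perm_sign(1)[OF bs eps]) measurable
  moreover have "(\<lambda>q. ?f (\<chi> k. (\<lambda>_. 1::real) k * q $ s k)) = (\<lambda>q. H (q0 q) * (q $ j)^2)"
    using q0_perm_sign[OF bs eps] by (auto simp: fun_eq_iff s_def)
  ultimately show ?thesis by simp
qed

lemma norm_sq_vec3: "norm (q::vec3) ^ 2 = (\<Sum>k\<in>UNIV. (q $ k)^2)"
  by (simp only: power2_norm_eq_inner) (simp add: inner_vec_def power2_eq_square)

lemma diag_moment: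
  fixes H :: "real \<Rightarrow> real" and i :: 3
  assumes [measurable]: "H \<in> borel_measurable borel"
    and int: "integrable lborel (\<lambda>q::vec3. H (q0 q) * norm q ^ 2)"
  shows "(\<integral>q. H (q0 q) * (q $ i)^2 \<partial>lborel) = (\<integral>q. H (q0 q) * norm q ^ 2 \<partial>lborel) / 3"
proof -
  have intk: "integrable lborel (\<lambda>q::vec3. H (q0 q) * (q $ k)^2)" for k
  proof (rule Bochner_Integration.integrable_bound[OF int])
    show "(\<lambda>q::vec3. H (q0 q) * (q $ k)^2) \<in> borel_measurable lborel" by measurable
    show "AE x in lborel. norm (H (q0 x) * (x $ k)\<^sup>2) \<le> norm (H (q0 x) * (norm x)\<^sup>2)"
    proof (intro AE_I2)
      fix x :: vec3
      have "(x $ k)^2 \<le> norm x ^ 2" using power_mono[OF component_le_norm_cart[of x k], of 2]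
        by simp
      then show "norm (H (q0 x) * (x $ k)\<^sup>2) \<le> norm (H (q0 x) * (norm x)\<^sup>2)"
        by (simp add: abs_mult mult_left_mono)
    qed
  qed
  have "(\<integral>q. H (q0 q) * norm q ^ 2 \<partial>lborel) = (\<integral>q. (\<Sum>k\<in>UNIV. H (q0 q) * (q $ k)^2) \<partial>lborel)"
    by (simp add: norm_sq_vec3 sum_distrib_left)
  also have "\<dots> = (\<Sum>k\<in>UNIV. (\<integral>q. H (q0 q) * (q $ k)^2 \<partial>lborel))"
    by (rule Bochner_Integration.integral_sum[where I=UNIV and f="\<lambda>k q. H (q0 q) * (q $ k)^2"]) (use intk in auto)
  also have "\<dots> = (\<Sum>k\<in>(UNIV::3 set). (\<integral>q. H (q0 q) * (q $ i)^2 \<partial>lborel))"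
    by (rule sum.cong) (auto intro: diag_swap[symmetric])
  also have "\<dots> = 3 * (\<integral>q. H (q0 q) * (q $ i)^2 \<partial>lborel)" by simp
  finally show ?thesis by simp
qed


lemma Mfun_pos: "(b::real) > 0 \<Longrightarrow> Mfun b > 0"
  using A0_pos[of b] by (simp add: Mfun_eq)

lemma sqrtJ0_meas[measurable]: "sqrtJ0 b \<in> borel_measurable borel"
  unfolding sqrtJ0_def[abs_def] J0_def[abs_def] by measurable

lemma sqrtJ0_sq: "(b::real) > 0 \<Longrightarrow> sqrtJ0 b q * sqrtJ0 b q = exp (- b * q0 q) / Mfun b"
  using Mfun_pos[of b] unfolding sqrtJ0_def J0_def by simp

lemma sqrtJ0_pos: "(b::real) > 0 \<Longrightarrow> sqrtJ0 b q > 0"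
  using Mfun_pos[of b] unfolding sqrtJ0_def J0_def by simp

lemma int_dom3:
  fixes f :: "vec3 \<Rightarrow> 'a::{banach, second_countable_topology}"
  assumes b: "(b::real) > 0" and fm: "f \<in> borel_measurable lborel"
    and bd: "\<And>q. norm (f q) \<le> C * (q0 q ^ k * exp (- b * q0 q))"
  shows "integrable lborel f"
proof (rule Bochner_Integration.integrable_bound[OF _ fm])
  show "integrable lborel (\<lambda>q. C * (q0 q ^ k * exp (- b * q0 q)))"
    using int_q0pow[OF b, of k] by simp
  show "AE x in lborel. norm (f x) \<le> norm (C * (q0 x ^ k * exp (- b * q0 x)))"
    by (intro AE_I2 order_trans[OF bd]) simp
qed

lemma exp_q0_pos: "0 < exp (- b * q0 q)" by simp

context
  fixes b :: real
  assumes b: "b > 0"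
begin

abbreviation "MM \<equiv> Mfun b"

lemma MMpos: "MM > 0" using Mfun_pos[OF b] .

lemma G1: "(\<integral>q. exp (- b * q0 q) / q0 q / MM \<partial>lborel) = alpha0 b"
proof -
  have "(\<integral>q. exp (- b * q0 q) / q0 q / MM \<partial>lborel) = (\<integral>q. exp (- b * q0 q) / q0 q \<partial>lborel) / MM"
    by (rule integral_divide_zero)
  then show ?thesis using int_over_q0[OF b] A0_pos[OF b] by (simp add: Mfun_eq alpha0_eq[OF b])
qed

lemma G2: "(\<integral>q. exp (- b * q0 q) / MM \<partial>lborel) = 1"
  using MMpos by (simp add: Mfun_def)

lemma G3: "(\<integral>q. exp (- b * q0 q) * q0 q / MM \<partial>lborel) = Psi b"
  using int_times_q0[OF b] A0_pos[OF b] b by (simp add: Mfun_eq Psi_eq[OF b] A3_eq[OF b] field_simps)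

lemma G4: "(\<integral>q. (exp (- b * q0 q) / q0 q / MM) *\<^sub>R q \<partial>lborel) = 0"
  using odd_moment[of "\<lambda>c. exp (- b * c) / c / MM"] by simp

lemma G5: "(\<integral>q. (exp (- b * q0 q) / MM) *\<^sub>R q \<partial>lborel) = 0"
  using odd_moment[of "\<lambda>c. exp (- b * c) / MM"] by simp

lemma G6: "(\<integral>q. exp (- b * q0 q) / q0 q / MM * (q $ i * q $ j) \<partial>lborel) = (if i = j then 1 / b else 0)"
proof (cases "i = j")
  case False
  then show ?thesis using offdiag_moment[of "\<lambda>c. exp (- b * c) / c / MM" i j] by simp
next
  case True
  have int: "integrable lborel (\<lambda>q::vec3. exp (- b * q0 q) / q0 q / MM * norm q ^ 2)"
  proof (rule int_dom3[OF b, where C="1/MM" and k=1])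
    show "(\<lambda>q::vec3. exp (- b * q0 q) / q0 q / MM * norm q ^ 2) \<in> borel_measurable lborel" by measurable
    fix q :: vec3
    have "norm q ^ 2 \<le> q0 q * q0 q" using power_mono[OF norm_le_q0[of q], of 2] by (simp add: power2_eq_square)
    then have "norm q ^ 2 / q0 q \<le> q0 q" using q0_pos[of q] by (simp add: divide_le_eq)
    then have "exp (- b * q0 q) * (norm q ^ 2 / q0 q) \<le> exp (- b * q0 q) * q0 q"
      by (intro mult_left_mono) auto
    then show "norm (exp (- b * q0 q) / q0 q / MM * norm q ^ 2) \<le> 1 / MM * (q0 q ^ 1 * exp (- b * q0 q))"
      using MMpos q0_pos[of q] by (simp add: field_simps)
  qed
  have "(\<integral>q. exp (- b * q0 q) / q0 q / MM * (q $ i)^2 \<partial>lborel) = (\<integral>q. exp (- b * q0 q) / q0 q / MM * norm q ^ 2 \<partial>lborel) / 3"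
    using diag_moment[of "\<lambda>c. exp (- b * c) / c / MM" i] int by simp
  also have "(\<integral>q. exp (- b * q0 q) / q0 q / MM * norm q ^ 2 \<partial>lborel) = (\<integral>q. exp (- b * q0 q) * norm q ^ 2 / q0 q / MM \<partial>lborel)"
    by (rule Bochner_Integration.integral_cong) (auto simp: field_simps)
  also have "\<dots> = (\<integral>q. exp (- b * q0 q) * norm q ^ 2 / q0 q \<partial>lborel) / MM"
    by (rule integral_divide_zero)
  also have "\<dots> = 3 / b"
    using int_normsq_over_q0[OF b] A0_pos[OF b] b by (simp add: Mfun_eq A3_eq[OF b])
  finally show ?thesis using True by (simp add: power2_eq_square)
qed

end


lemma vec_nth_meas[measurable]: "(\<lambda>x::real^'n. x $ i) \<in> borel_measurable borel"
  by (intro borel_measurable_continuous_onI continuous_on_component continuous_on_id)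

lemma q0_nonneg[simp]: "0 \<le> q0 q" using q0_pos[of q] by simp
lemma q0_abs[simp]: "\<bar>q0 q\<bar> = q0 q" by simp
lemma q0_pos'[simp]: "0 < q0 q" by (rule q0_pos)

context
  fixes b :: real
  assumes b: "b > 0"
begin

abbreviation "ss \<equiv> sqrtJ0 b"

lemma I1: "integrable lborel (\<lambda>q. exp (- b * q0 q) / q0 q / (Mfun b))"
proof (rule int_dom3[OF b, where C="1/(Mfun b)" and k=0])
  show "(\<lambda>q. exp (- b * q0 q) / q0 q / (Mfun b)) \<in> borel_measurable lborel" by measurable
  fix q :: vec3
  have h: "exp (- b * q0 q) / q0 q \<le> exp (- b * q0 q)"
    using q0_ge1[of q] by (simp add: divide_le_eq)
  show "norm (exp (- b * q0 q) / q0 q / (Mfun b)) \<le> 1 / (Mfun b) * (q0 q ^ 0 * exp (- b * q0 q))"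
    using divide_right_mono[OF h, of "Mfun b"] Mfun_pos[OF b] by simp
qed
lemma I2: "integrable lborel (\<lambda>q. exp (- b * q0 q) / (Mfun b))"
  by (rule int_dom3[OF b, where C="1/(Mfun b)" and k=0]) (use Mfun_pos[OF b] in \<open>auto simp: field_simps\<close>)
lemma I3: "integrable lborel (\<lambda>q. exp (- b * q0 q) * q0 q / (Mfun b))"
  by (rule int_dom3[OF b, where C="1/(Mfun b)" and k=1]) (use Mfun_pos[OF b] q0_pos in \<open>auto simp: field_simps abs_mult\<close>)
lemma I4: "integrable lborel (\<lambda>q. (exp (- b * q0 q) / q0 q / (Mfun b)) *\<^sub>R q)"
proof (rule int_dom3[OF b, where C="1/(Mfun b)" and k=0])
  show "(\<lambda>q. (exp (- b * q0 q) / q0 q / (Mfun b)) *\<^sub>R q) \<in> borel_measurable lborel" by measurable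
  fix q :: vec3
  have "norm q / q0 q \<le> 1" using norm_le_q0[of q] q0_pos[of q] by simp
  then show "norm ((exp (- b * q0 q) / q0 q / (Mfun b)) *\<^sub>R q) \<le> 1 / (Mfun b) * (q0 q ^ 0 * exp (- b * q0 q))"
    using Mfun_pos[OF b] q0_pos[of q] mult_left_mono[of "norm q / q0 q" 1 "exp (- b * q0 q) / (Mfun b)"]
    by (simp add: field_simps)
qed
lemma I5: "integrable lborel (\<lambda>q. (exp (- b * q0 q) / (Mfun b)) *\<^sub>R q)"
proof (rule int_dom3[OF b, where C="1/(Mfun b)" and k=1])
  show "(\<lambda>q. (exp (- b * q0 q) / (Mfun b)) *\<^sub>R q) \<in> borel_measurable lborel" by measurable
  fix q :: vec3
  show "norm ((exp (- b * q0 q) / (Mfun b)) *\<^sub>R q) \<le> 1 / (Mfun b) * (q0 q ^ 1 * exp (- b * q0 q))"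
    using Mfun_pos[OF b] norm_le_q0[of q] mult_left_mono[of "norm q" "q0 q" "exp (- b * q0 q) / (Mfun b)"]
    by (simp add: field_simps)
qed
lemma I6: "integrable lborel (\<lambda>q. exp (- b * q0 q) / q0 q / (Mfun b) * (q $ i * q $ j))"
proof (rule int_dom3[OF b, where C="1/(Mfun b)" and k=1])
  show "(\<lambda>q. exp (- b * q0 q) / q0 q / (Mfun b) * (q $ i * q $ j)) \<in> borel_measurable lborel" by measurable
  fix q :: vec3
  have "\<bar>q $ i * q $ j\<bar> \<le> norm q * norm q"
    unfolding abs_mult by (intro mult_mono component_le_norm_cart) auto
  also have "\<dots> \<le> q0 q * q0 q" by (intro mult_mono norm_le_q0) auto
  finally have "\<bar>q $ i * q $ j\<bar> / q0 q \<le> q0 q" using q0_pos[of q] by (simp add: divide_le_eq)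
  then have "exp (- b * q0 q) / (Mfun b) * (\<bar>q $ i * q $ j\<bar> / q0 q) \<le> exp (- b * q0 q) / (Mfun b) * q0 q"
    using Mfun_pos[OF b] by (intro mult_left_mono) auto
  then show "norm (exp (- b * q0 q) / q0 q / (Mfun b) * (q $ i * q $ j)) \<le> 1 / (Mfun b) * (q0 q ^ 1 * exp (- b * q0 q))"
    using Mfun_pos[OF b] q0_pos[of q] by (simp add: field_simps abs_mult)
qed

lemma I7: "integrable lborel (\<lambda>q. ((c \<bullet> q) * (exp (- b * q0 q) / q0 q / (Mfun b))) *\<^sub>R (q::vec3))"
proof (rule int_dom3[OF b, where C="norm c/(Mfun b)" and k=1])
  show "(\<lambda>q. ((c \<bullet> q) * (exp (- b * q0 q) / q0 q / (Mfun b))) *\<^sub>R (q::vec3)) \<in> borel_measurable lborel" by measurable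
  fix q :: vec3
  have "\<bar>c \<bullet> q\<bar> * norm q \<le> norm c * norm q * norm q"
    using Cauchy_Schwarz_ineq2[of c q] by (intro mult_right_mono) auto
  also have "\<dots> \<le> norm c * (q0 q * q0 q)"
    by (simp add: mult.assoc) (intro mult_left_mono mult_mono norm_le_q0, auto)
  finally have "\<bar>c \<bullet> q\<bar> * norm q / q0 q \<le> norm c * q0 q" using q0_pos[of q] by (simp add: divide_le_eq)
  then have "exp (- b * q0 q) / (Mfun b) * (\<bar>c \<bullet> q\<bar> * norm q / q0 q) \<le> exp (- b * q0 q) / (Mfun b) * (norm c * q0 q)"
    using Mfun_pos[OF b] by (intro mult_left_mono) auto
  then show "norm (((c \<bullet> q) * (exp (- b * q0 q) / q0 q / (Mfun b))) *\<^sub>R q) \<le> norm c / (Mfun b) * (q0 q ^ 1 * exp (- b * q0 q))"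
    using Mfun_pos[OF b] q0_pos[of q] by (simp add: field_simps abs_mult)
qed

lemma G7: "(\<integral>q. ((c \<bullet> q) * (exp (- b * q0 q) / q0 q / (Mfun b))) *\<^sub>R (q::vec3) \<partial>lborel) = (1 / b) *\<^sub>R c"
proof (rule vec_eq_iff[THEN iffD2], rule allI)
  fix i :: 3
  let ?E = "\<lambda>q. exp (- b * q0 q) / q0 q / (Mfun b)"
  have "(\<integral>q. ((c \<bullet> q) * ?E q) *\<^sub>R q \<partial>lborel) $ i = (\<integral>q. ((c \<bullet> q) * ?E q) *\<^sub>R q \<partial>lborel) \<bullet> axis i 1"
    by (simp add: cart_eq_inner_axis)
  also have "\<dots> = (\<integral>q. (((c \<bullet> q) * ?E q) *\<^sub>R q) \<bullet> axis i 1 \<partial>lborel)"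
    by (rule integral_inner_left[symmetric]) (rule I7)
  also have "\<dots> = (\<integral>q. (\<Sum>j\<in>UNIV. c $ j * (?E q * (q $ j * q $ i))) \<partial>lborel)"
    by (rule Bochner_Integration.integral_cong)
       (simp_all only: cart_eq_inner_axis[symmetric] vector_scaleR_component,
        simp add: inner_vec_def sum_distrib_left sum_divide_distrib mult_ac)
  also have "\<dots> = (\<Sum>j\<in>UNIV. (\<integral>q. c $ j * (?E q * (q $ j * q $ i)) \<partial>lborel))"
    by (rule Bochner_Integration.integral_sum[where I=UNIV and f="\<lambda>j q. c $ j * (?E q * (q $ j * q $ i))"])
       (intro integrable_mult_right I6)
  also have "\<dots> = (\<Sum>j\<in>UNIV. c $ j * (\<integral>q. ?E q * (q $ j * q $ i) \<partial>lborel))"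
    by (simp only: integral_mult_right_zero)
  also have "\<dots> = (\<Sum>j\<in>UNIV. c $ j * (if j = i then 1 / b else 0))"
    using G6[OF b] by simp
  also have "\<dots> = c $ i / b" by (simp add: if_distrib cong: if_cong)
  finally show "(\<integral>q. ((c \<bullet> q) * ?E q) *\<^sub>R q \<partial>lborel) $ i = ((1 / b) *\<^sub>R c) $ i" by simp
qed

end


lemma q0_nz[simp]: "q0 q \<noteq> 0" by (metis q0_pos order_less_irrefl)

lemma absprod: "\<bar>x * y\<bar> \<le> x^2 + (y::real)^2"
proof -
  have "0 \<le> (\<bar>x\<bar> - \<bar>y\<bar>)^2" by simp
  then have "2 * (\<bar>x\<bar> * \<bar>y\<bar>) \<le> x^2 + y^2" by (simp add: power2_eq_square algebra_simps)
  moreover have "0 \<le> \<bar>x\<bar> * \<bar>y\<bar>" by simp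
  ultimately have "\<bar>x\<bar> * \<bar>y\<bar> \<le> x^2 + y^2" by linarith
  then show ?thesis by (simp add: abs_mult)
qed

lemma lin3:
  fixes f g :: "'a \<Rightarrow> real" and h :: "'a \<Rightarrow> 'b::{real_inner, banach, second_countable_topology}"
  assumes f: "integrable M f" and g: "integrable M g" and h: "integrable M h"
  shows "(\<integral>x. a * f x + b0 * g x + c \<bullet> h x \<partial>M) = a * integral\<^sup>L M f + b0 * integral\<^sup>L M g + c \<bullet> integral\<^sup>L M h"
proof -
  have "(\<integral>x. a * f x + b0 * g x + c \<bullet> h x \<partial>M) = (\<integral>x. a * f x + b0 * g x \<partial>M) + (\<integral>x. c \<bullet> h x \<partial>M)"
    by (rule Bochner_Integration.integral_add) (use f g h in auto)
  also have "(\<integral>x. a * f x + b0 * g x \<partial>M) = (\<integral>x. a * f x \<partial>M) + (\<integral>x. b0 * g x \<partial>M)"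
    by (rule Bochner_Integration.integral_add) (use f g in auto)
  finally show ?thesis using h by simp
qed

lemma lin3v:
  fixes f g :: "'a \<Rightarrow> 'b::{real_normed_vector, banach, second_countable_topology}"
  assumes f: "integrable M f" and g: "integrable M g" and h: "integrable M h"
  shows "(\<integral>x. a *\<^sub>R f x + b0 *\<^sub>R g x + h x \<partial>M) = a *\<^sub>R integral\<^sup>L M f + b0 *\<^sub>R integral\<^sup>L M g + integral\<^sup>L M h"
proof -
  have "(\<integral>x. a *\<^sub>R f x + b0 *\<^sub>R g x + h x \<partial>M) = (\<integral>x. a *\<^sub>R f x + b0 *\<^sub>R g x \<partial>M) + (\<integral>x. h x \<partial>M)"
    by (rule Bochner_Integration.integral_add) (use f g h in auto)
  also have "(\<integral>x. a *\<^sub>R f x + b0 *\<^sub>R g x \<partial>M) = (\<integral>x. a *\<^sub>R f x \<partial>M) + (\<integral>x. b0 *\<^sub>R g x \<partial>M)"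
    by (rule Bochner_Integration.integral_add) (use f g in auto)
  finally show ?thesis by simp
qed

context
  fixes b :: real
  assumes b: "b > 0"
begin

lemma ss_sq: "sqrtJ0 b q * sqrtJ0 b q = exp (- b * q0 q) / Mfun b"
  by (rule sqrtJ0_sq[OF b])

lemma Nmom:
  fixes a b0 :: real and c :: vec3
  shows "nh_energy b (\<lambda>q. (a + b0 * q0 q + c \<bullet> q) * sqrtJ0 b q) = a + b0 * Psi b"
    and "nh_alpha b (\<lambda>q. (a + b0 * q0 q + c \<bullet> q) * sqrtJ0 b q) = a * alpha0 b + b0"
    and "nh_u b (\<lambda>q. (a + b0 * q0 q + c \<bullet> q) * sqrtJ0 b q) = (1/b) *\<^sub>R c"
proof -
  let ?M = "Mfun b"
  have pw1: "(a + b0 * q0 q + c \<bullet> q) * sqrtJ0 b q * sqrtJ0 b q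
      = a * (exp (- b * q0 q) / ?M) + b0 * (exp (- b * q0 q) * q0 q / ?M) + c \<bullet> ((exp (- b * q0 q) / ?M) *\<^sub>R q)" for q
    using Mfun_pos[OF b] by (simp only: mult.assoc ss_sq) (simp add: field_simps)
  have "nh_energy b (\<lambda>q. (a + b0 * q0 q + c \<bullet> q) * sqrtJ0 b q)
      = (\<integral>q. a * (exp (- b * q0 q) / ?M) + b0 * (exp (- b * q0 q) * q0 q / ?M) + c \<bullet> ((exp (- b * q0 q) / ?M) *\<^sub>R q) \<partial>lborel)"
    unfolding nh_energy_def by (simp only: pw1)
  also have "\<dots> = a * (\<integral>q. exp (- b * q0 q) / ?M \<partial>lborel) + b0 * (\<integral>q. exp (- b * q0 q) * q0 q / ?M \<partial>lborel)
      + c \<bullet> (\<integral>q. (exp (- b * q0 q) / ?M) *\<^sub>R q \<partial>lborel)"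
    by (rule lin3[OF I2[OF b] I3[OF b] I5[OF b]])
  also have "\<dots> = a + b0 * Psi b" using G2[OF b] G3[OF b] G5[OF b] by simp
  finally show "nh_energy b (\<lambda>q. (a + b0 * q0 q + c \<bullet> q) * sqrtJ0 b q) = a + b0 * Psi b" .
  have pw2: "(a + b0 * q0 q + c \<bullet> q) * sqrtJ0 b q * sqrtJ0 b q / q0 q
      = a * (exp (- b * q0 q) / q0 q / ?M) + b0 * (exp (- b * q0 q) / ?M) + c \<bullet> ((exp (- b * q0 q) / q0 q / ?M) *\<^sub>R q)" for q
    using q0_pos[of q] Mfun_pos[OF b] by (simp only: mult.assoc ss_sq) (simp add: field_simps q0_nz Mfun_pos[OF b, THEN less_imp_neq, symmetric])
  have "nh_alpha b (\<lambda>q. (a + b0 * q0 q + c \<bullet> q) * sqrtJ0 b q)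
      = (\<integral>q. a * (exp (- b * q0 q) / q0 q / ?M) + b0 * (exp (- b * q0 q) / ?M) + c \<bullet> ((exp (- b * q0 q) / q0 q / ?M) *\<^sub>R q) \<partial>lborel)"
    unfolding nh_alpha_def by (simp only: pw2)
  also have "\<dots> = a * (\<integral>q. exp (- b * q0 q) / q0 q / ?M \<partial>lborel) + b0 * (\<integral>q. exp (- b * q0 q) / ?M \<partial>lborel)
      + c \<bullet> (\<integral>q. (exp (- b * q0 q) / q0 q / ?M) *\<^sub>R q \<partial>lborel)"
    by (rule lin3[OF I1[OF b] I2[OF b] I4[OF b]])
  also have "\<dots> = a * alpha0 b + b0" using G1[OF b] G2[OF b] G4[OF b] by simp
  finally show "nh_alpha b (\<lambda>q. (a + b0 * q0 q + c \<bullet> q) * sqrtJ0 b q) = a * alpha0 b + b0" .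
  have pw3: "((a + b0 * q0 q + c \<bullet> q) * sqrtJ0 b q * sqrtJ0 b q / q0 q) *\<^sub>R q
      = a *\<^sub>R ((exp (- b * q0 q) / q0 q / ?M) *\<^sub>R q) + b0 *\<^sub>R ((exp (- b * q0 q) / ?M) *\<^sub>R q)
        + ((c \<bullet> q) * (exp (- b * q0 q) / q0 q / ?M)) *\<^sub>R q" for q
    unfolding pw2 by (simp add: algebra_simps)
  have "nh_u b (\<lambda>q. (a + b0 * q0 q + c \<bullet> q) * sqrtJ0 b q)
      = (\<integral>q. a *\<^sub>R ((exp (- b * q0 q) / q0 q / ?M) *\<^sub>R q) + b0 *\<^sub>R ((exp (- b * q0 q) / ?M) *\<^sub>R q)
        + ((c \<bullet> q) * (exp (- b * q0 q) / q0 q / ?M)) *\<^sub>R q \<partial>lborel)"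
    unfolding nh_u_def by (simp only: pw3)
  also have "\<dots> = a *\<^sub>R (\<integral>q. (exp (- b * q0 q) / q0 q / ?M) *\<^sub>R q \<partial>lborel) + b0 *\<^sub>R (\<integral>q. (exp (- b * q0 q) / ?M) *\<^sub>R q \<partial>lborel)
      + (\<integral>q. ((c \<bullet> q) * (exp (- b * q0 q) / q0 q / ?M)) *\<^sub>R q \<partial>lborel)"
    by (rule lin3v[OF I4[OF b] I5[OF b] I7[OF b, of c]])
  also have "\<dots> = (1/b) *\<^sub>R c" using G4[OF b] G5[OF b] G7[OF b, of c] by simp
  finally show "nh_u b (\<lambda>q. (a + b0 * q0 q + c \<bullet> q) * sqrtJ0 b q) = (1/b) *\<^sub>R c" .
qed

lemma L2_int:
  assumes "L2 h"
  shows "integrable lborel (\<lambda>q. h q * sqrtJ0 b q)"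
    and "integrable lborel (\<lambda>q. h q * sqrtJ0 b q / q0 q)"
    and "integrable lborel (\<lambda>q. (h q * sqrtJ0 b q / q0 q) *\<^sub>R q)"
proof -
  have hm[measurable]: "h \<in> borel_measurable lborel" and hi: "integrable lborel (\<lambda>q. (h q)^2)"
    using assms by (auto simp: L2_def)
  have Fi: "integrable lborel (\<lambda>q. (h q)^2 + exp (- b * q0 q) / Mfun b)"
    using hi I2[OF b] by simp
  have bd: "\<bar>h q * sqrtJ0 b q\<bar> \<le> (h q)^2 + exp (- b * q0 q) / Mfun b" for q
    using absprod[of "h q" "sqrtJ0 b q"] ss_sq[of q] by (simp add: power2_eq_square)
  have Fn: "norm ((h q)^2 + exp (- b * q0 q) / Mfun b) = (h q)^2 + exp (- b * q0 q) / Mfun b" for q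
    using Mfun_pos[OF b] by simp
  have Fa: "\<bar>(h q)^2 + exp (- b * q0 q) / Mfun b\<bar> = (h q)^2 + exp (- b * q0 q) / Mfun b" for q
    using Fn[of q] by simp
  show "integrable lborel (\<lambda>q. h q * sqrtJ0 b q)"
  proof (rule Bochner_Integration.integrable_bound[OF Fi])
    show "(\<lambda>q. h q * sqrtJ0 b q) \<in> borel_measurable lborel" by measurable
    show "AE x in lborel. norm (h x * sqrtJ0 b x) \<le> norm ((h x)\<^sup>2 + exp (- b * q0 x) / Mfun b)"
      by (intro AE_I2) (simp only: Fa real_norm_def bd)
  qed
  show "integrable lborel (\<lambda>q. h q * sqrtJ0 b q / q0 q)"
  proof (rule Bochner_Integration.integrable_bound[OF Fi])
    show "(\<lambda>q. h q * sqrtJ0 b q / q0 q) \<in> borel_measurable lborel" by measurable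
    show "AE x in lborel. norm (h x * sqrtJ0 b x / q0 x) \<le> norm ((h x)\<^sup>2 + exp (- b * q0 x) / Mfun b)"
    proof (intro AE_I2)
      fix x
      have "\<bar>h x * sqrtJ0 b x\<bar> / q0 x \<le> \<bar>h x * sqrtJ0 b x\<bar>"
        using q0_ge1[of x] by (simp add: divide_le_eq mult_le_cancel_left1)
      then show "norm (h x * sqrtJ0 b x / q0 x) \<le> norm ((h x)\<^sup>2 + exp (- b * q0 x) / Mfun b)"
        using bd[of x] by (simp add: Fn)
    qed
  qed
  show "integrable lborel (\<lambda>q. (h q * sqrtJ0 b q / q0 q) *\<^sub>R q)"
  proof (rule Bochner_Integration.integrable_bound[OF Fi])
    show "(\<lambda>q. (h q * sqrtJ0 b q / q0 q) *\<^sub>R q) \<in> borel_measurable lborel" by measurable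
    show "AE x in lborel. norm ((h x * sqrtJ0 b x / q0 x) *\<^sub>R x) \<le> norm ((h x)\<^sup>2 + exp (- b * q0 x) / Mfun b)"
    proof (intro AE_I2)
      fix x
      have "\<bar>h x * sqrtJ0 b x\<bar> / q0 x * norm x \<le> \<bar>h x * sqrtJ0 b x\<bar>"
      proof -
        have "norm x / q0 x \<le> 1" using norm_le_q0[of x] by simp
        then have "\<bar>h x * sqrtJ0 b x\<bar> * (norm x / q0 x) \<le> \<bar>h x * sqrtJ0 b x\<bar> * 1"
          by (intro mult_left_mono) auto
        then show ?thesis by simp
      qed
      then show "norm ((h x * sqrtJ0 b x / q0 x) *\<^sub>R x) \<le> norm ((h x)\<^sup>2 + exp (- b * q0 x) / Mfun b)"
        using bd[of x] by (simp add: Fn)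
    qed
  qed
qed

end


context
  fixes b :: real
  assumes b: "b > 0"
begin

lemma inN_L2:
  fixes a b0 :: real and c :: vec3
  shows "L2 (\<lambda>q. (a + b0 * q0 q + c \<bullet> q) * sqrtJ0 b q)"
  unfolding L2_def
proof
  show "(\<lambda>q. (a + b0 * q0 q + c \<bullet> q) * sqrtJ0 b q) \<in> borel_measurable lborel" by measurable
  define K where "K = \<bar>a\<bar> + \<bar>b0\<bar> + norm c"
  show "integrable lborel (\<lambda>q. ((a + b0 * q0 q + c \<bullet> q) * sqrtJ0 b q)^2)"
  proof (rule int_dom3[OF b, where C="K^2 / Mfun b" and k=2])
    show "(\<lambda>q. ((a + b0 * q0 q + c \<bullet> q) * sqrtJ0 b q)^2) \<in> borel_measurable lborel" by measurable
    fix q :: vec3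
    have "\<bar>a + b0 * q0 q + c \<bullet> q\<bar> \<le> \<bar>a\<bar> + \<bar>b0 * q0 q\<bar> + \<bar>c \<bullet> q\<bar>"
      by (rule order_trans[OF abs_triangle_ineq add_right_mono[OF abs_triangle_ineq]])
    also have "\<dots> \<le> \<bar>a\<bar> + \<bar>b0\<bar> * q0 q + norm c * norm q"
      using Cauchy_Schwarz_ineq2[of c q] by (simp add: abs_mult)
    also have "\<dots> \<le> \<bar>a\<bar> * q0 q + \<bar>b0\<bar> * q0 q + norm c * q0 q"
      using q0_ge1[of q] norm_le_q0[of q]
      by (intro add_mono mult_left_mono) (auto simp: mult_le_cancel_left1)
    also have "\<dots> = K * q0 q" by (simp add: K_def algebra_simps)
    finally have h: "\<bar>a + b0 * q0 q + c \<bullet> q\<bar> \<le> K * q0 q" .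
    have "(a + b0 * q0 q + c \<bullet> q)^2 \<le> (K * q0 q)^2"
      using power_mono[OF h, of 2] by simp
    then have "(a + b0 * q0 q + c \<bullet> q)^2 * (exp (- b * q0 q) / Mfun b) \<le> (K * q0 q)^2 * (exp (- b * q0 q) / Mfun b)"
      using Mfun_pos[OF b] by (intro mult_right_mono) auto
    moreover have "((a + b0 * q0 q + c \<bullet> q) * sqrtJ0 b q)^2 = (a + b0 * q0 q + c \<bullet> q)^2 * (sqrtJ0 b q * sqrtJ0 b q)"
      by (simp add: power2_eq_square mult_ac)
    moreover have "sqrtJ0 b q * sqrtJ0 b q = exp (- b * q0 q) / Mfun b" by (rule ss_sq[OF b])
    ultimately show "norm (((a + b0 * q0 q + c \<bullet> q) * sqrtJ0 b q)^2) \<le> K^2 / Mfun b * (q0 q ^ 2 * exp (- b * q0 q))"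
      using Mfun_pos[OF b] by (simp add: power_mult_distrib field_simps)
  qed
qed

lemma W:
  fixes a b0 :: real and c :: vec3
  assumes "L2 h"
  shows "integrable lborel (\<lambda>q. h q * ((a + b0 * q0 q + c \<bullet> q) * sqrtJ0 b q) / q0 q)"
    and "wip h (\<lambda>q. (a + b0 * q0 q + c \<bullet> q) * sqrtJ0 b q) = a * nh_alpha b h + b0 * nh_energy b h + c \<bullet> nh_u b h"
proof -
  have pw: "h q * ((a + b0 * q0 q + c \<bullet> q) * sqrtJ0 b q) / q0 q
     = a * (h q * sqrtJ0 b q / q0 q) + b0 * (h q * sqrtJ0 b q) + c \<bullet> ((h q * sqrtJ0 b q / q0 q) *\<^sub>R q)" for q
    by (simp add: field_simps)
  note i = L2_int[OF b assms]
  show "integrable lborel (\<lambda>q. h q * ((a + b0 * q0 q + c \<bullet> q) * sqrtJ0 b q) / q0 q)"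
    unfolding pw using i by (intro Bochner_Integration.integrable_add integrable_mult_right integrable_inner_right) auto
  show "wip h (\<lambda>q. (a + b0 * q0 q + c \<bullet> q) * sqrtJ0 b q) = a * nh_alpha b h + b0 * nh_energy b h + c \<bullet> nh_u b h"
    unfolding wip_def pw nh_alpha_def nh_energy_def nh_u_def by (rule lin3[OF i(2) i(1) i(3)])
qed

lemma Pop_form:
  "Pop b f = (\<lambda>q. ((Psi b * nh_alpha b f - nh_energy b f) / kappa0 b
       + (alpha0 b * nh_energy b f - nh_alpha b f) / kappa0 b * q0 q
       + (b *\<^sub>R nh_u b f) \<bullet> q) * sqrtJ0 b q)"
  using kappa0_pos[OF b] unfolding Pop_def by (auto simp: fun_eq_iff field_simps)

end

lemma lin_indep:
  assumes b: "(b::real) > 0" and h: "\<forall>q. (a + b0 * q0 q + c \<bullet> q) * sqrtJ0 b q = 0"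
  shows "a = 0 \<and> b0 = 0 \<and> c = 0"
proof -
  have z: "a + b0 * q0 q + c \<bullet> q = 0" for q using h sqrtJ0_pos[OF b, of q] by auto
  have q00: "q0 0 = 1" by (simp add: q0_def)
  have qc: "q0 (- q) = q0 q" for q by (simp add: q0_def)
  from z[of c] z[of "-c"] have "c \<bullet> c = 0" by (simp add: qc)
  then have c0: "c = 0" by simp
  from z[of 0] have e1: "a + b0 = 0" by (simp add: q00)
  define v :: vec3 where "v = axis 1 1"
  have nv: "norm v = 1" by (simp add: v_def)
  have "q0 v = sqrt 2" by (simp add: q0_def nv)
  with z[of v] c0 have e2: "a + b0 * sqrt 2 = 0" by simp
  have "b0 * (sqrt 2 - 1) = (a + b0 * sqrt 2) - (a + b0)" by (simp add: algebra_simps)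
  with e1 e2 have "b0 * (sqrt 2 - 1) = 0" by simp
  moreover have "sqrt 2 \<noteq> (1::real)" by simp
  ultimately have "b0 = 0" by simp
  with e1 c0 show ?thesis by simp
qed


theorem lemma4p4:
  fixes \<beta>0 :: real
  assumes "\<beta>0 > 0"
  shows "(\<forall>a b0 (b::vec3). (\<forall>q. (a + b0 * q0 q + b \<bullet> q) * sqrtJ0 \<beta>0 q = 0)
            \<longrightarrow> a = 0 \<and> b0 = 0 \<and> b = 0)
       \<and> (\<forall>g. inN \<beta>0 g \<longrightarrow> L2 g)
       \<and> (\<forall>f. L2 f \<longrightarrow> inN \<beta>0 (Pop \<beta>0 f)
              \<and> (\<forall>g. inN \<beta>0 g \<longrightarrow> wip (\<lambda>q. f q - Pop \<beta>0 f q) g = 0))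
       \<and> (\<forall>f g. L2 f \<longrightarrow> L2 g \<longrightarrow> wip (Pop \<beta>0 f) g = wip f (Pop \<beta>0 g))"
proof -
  note b = assms
  have kpos: "kappa0 \<beta>0 > 0" by (rule kappa0_pos[OF b])
  have kalt: "kappa0 \<beta>0 = alpha0 \<beta>0 * Psi \<beta>0 - 1" by (rule kappa0_alt[OF b])
  have inN_eq: "inN \<beta>0 g \<longleftrightarrow> (\<exists>a b0 c. g = (\<lambda>q. (a + b0 * q0 q + c \<bullet> q) * sqrtJ0 \<beta>0 q))" for g
    unfolding inN_def by (auto simp: fun_eq_iff)
  define cA where "cA f = (Psi \<beta>0 * nh_alpha \<beta>0 f - nh_energy \<beta>0 f) / kappa0 \<beta>0" for f
  define cB where "cB f = (alpha0 \<beta>0 * nh_energy \<beta>0 f - nh_alpha \<beta>0 f) / kappa0 \<beta>0" for f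
  define cC where "cC f = \<beta>0 *\<^sub>R nh_u \<beta>0 f" for f
  have PF: "Pop \<beta>0 f = (\<lambda>q. (cA f + cB f * q0 q + cC f \<bullet> q) * sqrtJ0 \<beta>0 q)" for f
    unfolding cA_def cB_def cC_def by (rule Pop_form[OF b])
  have c1: "\<forall>a b0 (c::vec3). (\<forall>q. (a + b0 * q0 q + c \<bullet> q) * sqrtJ0 \<beta>0 q = 0) \<longrightarrow> a = 0 \<and> b0 = 0 \<and> c = 0"
    using lin_indep[OF b] by blast
  have c2: "\<forall>g. inN \<beta>0 g \<longrightarrow> L2 g"
    using inN_L2[OF b] by (auto simp: inN_eq)
  have PE: "nh_energy \<beta>0 (Pop \<beta>0 f) = nh_energy \<beta>0 f" for f
  proof -
    have "cA f + cB f * Psi \<beta>0 = nh_energy \<beta>0 f * (alpha0 \<beta>0 * Psi \<beta>0 - 1) / kappa0 \<beta>0"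
      unfolding cA_def cB_def using kpos by (simp add: field_simps)
    also have "\<dots> = nh_energy \<beta>0 f" using kpos by (simp add: kalt[symmetric])
    finally show ?thesis unfolding PF Nmom(1)[OF b] .
  qed
  have PA: "nh_alpha \<beta>0 (Pop \<beta>0 f) = nh_alpha \<beta>0 f" for f
  proof -
    have "cA f * alpha0 \<beta>0 + cB f = nh_alpha \<beta>0 f * (alpha0 \<beta>0 * Psi \<beta>0 - 1) / kappa0 \<beta>0"
      unfolding cA_def cB_def using kpos by (simp add: field_simps)
    also have "\<dots> = nh_alpha \<beta>0 f" using kpos by (simp add: kalt[symmetric])
    finally show ?thesis unfolding PF Nmom(2)[OF b] .
  qed
  have PU: "nh_u \<beta>0 (Pop \<beta>0 f) = nh_u \<beta>0 f" for f
    unfolding PF Nmom(3)[OF b] cC_def using b by simp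
  have PL2: "L2 (Pop \<beta>0 f)" for f unfolding PF by (rule inN_L2[OF b])
  have c3: "\<forall>f. L2 f \<longrightarrow> inN \<beta>0 (Pop \<beta>0 f) \<and> (\<forall>g. inN \<beta>0 g \<longrightarrow> wip (\<lambda>q. f q - Pop \<beta>0 f q) g = 0)"
  proof (intro allI impI conjI)
    fix f assume f: "L2 f"
    show "inN \<beta>0 (Pop \<beta>0 f)" unfolding inN_eq PF by blast
    fix g assume "inN \<beta>0 g"
    then obtain a b0 c where g: "g = (\<lambda>q. (a + b0 * q0 q + c \<bullet> q) * sqrtJ0 \<beta>0 q)" by (auto simp: inN_eq)
    have "wip (\<lambda>q. f q - Pop \<beta>0 f q) g = (\<integral>q. f q * g q / q0 q - Pop \<beta>0 f q * g q / q0 q \<partial>lborel)"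
      unfolding wip_def by (rule Bochner_Integration.integral_cong) (auto simp: field_simps)
    also have "\<dots> = wip f g - wip (Pop \<beta>0 f) g"
      unfolding wip_def g using W(1)[OF b f, of a b0 c] W(1)[OF b PL2[of f], of a b0 c]
      by (rule Bochner_Integration.integral_diff)
    also have "\<dots> = 0" unfolding g W(2)[OF b f] W(2)[OF b PL2[of f]] PE PA PU by simp
    finally show "wip (\<lambda>q. f q - Pop \<beta>0 f q) g = 0" .
  qed
  have c4: "\<forall>f g. L2 f \<longrightarrow> L2 g \<longrightarrow> wip (Pop \<beta>0 f) g = wip f (Pop \<beta>0 g)"
  proof (intro allI impI)
    fix f g assume f: "L2 f" and g: "L2 g"
    have "wip (Pop \<beta>0 f) g = wip g (Pop \<beta>0 f)" unfolding wip_def by (simp add: mult.commute)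
    also have "\<dots> = cA f * nh_alpha \<beta>0 g + cB f * nh_energy \<beta>0 g + cC f \<bullet> nh_u \<beta>0 g"
      unfolding PF by (rule W(2)[OF b g])
    also have "\<dots> = cA g * nh_alpha \<beta>0 f + cB g * nh_energy \<beta>0 f + cC g \<bullet> nh_u \<beta>0 f"
      unfolding cA_def cB_def cC_def using kpos by (simp add: field_simps inner_commute)
    also have "\<dots> = wip f (Pop \<beta>0 g)"
      unfolding PF by (rule W(2)[OF b f, symmetric])
    finally show "wip (Pop \<beta>0 f) g = wip f (Pop \<beta>0 g)" .
  qed
  show ?thesis using c1 c2 c3 c4 by blast
qed


end
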